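(* Let $\alpha\in(1,\infty]$, let $Q$ be a probability measure on $\mathcal Z$, and let $P_{Z|X}$ be a Markov kernel from $\mathcal X$ to $\mathcal Z$ with $P_{Z|X}(\cdot|x)\ll Q$ for every $x\in\mathcal X$. For every $x\in\mathcal X$, if $K$ is produced by PPR with parameter $\alpha$, proposal $Q$ and target $P=P_{Z|X}(\cdot|x)$, then the output $Z_K$ has distribution exactly $P_{Z|X}(\cdot|x)$.
   Context: Poisson private representation (PPR). Let $Q$ be a probability measure on a measurable space $\mathcal Z$ and $P$ a probability measure with $P\ll Q$. Let $Z_1,Z_2,\ldots$ be i.i.d. with law $Q$, and independently let $T_1\le T_2\le\cdots$ be the points of a homogeneous Poisson process of rate $1$ on $[0,\infty)$ (i.e. $T_1,T_2-T_1,T_3-T_2,\ldots$ are i.i.d. $\mathrm{Exp}(1)$). Put $\tilde T_i:=T_i\cdot\big(\frac{\mathrm dP}{\mathrm dQ}(Z_i)\big)^{-1}$, with $\tilde T_i:=\infty$ when $\frac{\mathrm dP}{\mathrm dQ}(Z_i)=0$ (and $\infty^{-\alpha}:=0$). For $\alpha\in(1,\infty)$, PPR with parameter $\alpha$ draws a random index $K\in\{1,2,\ldots\}$ with $\Pr(K=k\mid (Z_i,T_i)_{i})=\tilde T_k^{-\alpha}/\sum_{i=1}^\infty\tilde T_i^{-\alpha}$; for $\alpha=\infty$, $K:=\arg\min_i\tilde T_i$. The output is $Z_K$. *)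

theory Defs
  imports "HOL-Probability.Probability"
begin

text \<open>Underlying randomness of PPR: an i.i.d. sequence (Z_i) with law Q, and independently
  an i.i.d. sequence (E_i) of Exp(1) inter-arrival times (indices start at 0).\<close>
definition ppr_space :: "'z measure \<Rightarrow> ((nat \<Rightarrow> 'z) \<times> (nat \<Rightarrow> real)) measure" where
  "ppr_space Q = (PiM UNIV (\<lambda>i::nat. Q)) \<Otimes>\<^sub>M (PiM UNIV (\<lambda>i::nat. density lborel (exponential_density 1)))"

definition ppr_T :: "(nat \<Rightarrow> real) \<Rightarrow> nat \<Rightarrow> real" where
  "ppr_T e i = (\<Sum>j\<le>i. e j)"

definition ppr_dens :: "'z measure \<Rightarrow> 'z measure \<Rightarrow> 'z \<Rightarrow> real" where
  "ppr_dens Q P z = enn2real (RN_deriv Q P z)"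

definition ppr_Ttilde :: "'z measure \<Rightarrow> 'z measure \<Rightarrow> (nat \<Rightarrow> 'z) \<times> (nat \<Rightarrow> real) \<Rightarrow> nat \<Rightarrow> ereal" where
  "ppr_Ttilde Q P \<omega> i =
     (if ppr_dens Q P (fst \<omega> i) = 0 then \<infinity>
      else ereal (ppr_T (snd \<omega>) i / ppr_dens Q P (fst \<omega> i)))"

definition ppr_weight :: "real \<Rightarrow> 'z measure \<Rightarrow> 'z measure \<Rightarrow> (nat \<Rightarrow> 'z) \<times> (nat \<Rightarrow> real) \<Rightarrow> nat \<Rightarrow> ennreal" where
  "ppr_weight a Q P \<omega> i =
     (case ppr_Ttilde Q P \<omega> i of ereal t \<Rightarrow> ennreal (t powr (- a)) | _ \<Rightarrow> 0)"

text \<open>Conditional probability Pr(K = k | (Z_i,T_i)_i) of PPR with parameter alpha.\<close>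
definition ppr_index_prob :: "ereal \<Rightarrow> 'z measure \<Rightarrow> 'z measure \<Rightarrow> (nat \<Rightarrow> 'z) \<times> (nat \<Rightarrow> real) \<Rightarrow> nat \<Rightarrow> ennreal" where
  "ppr_index_prob \<alpha> Q P \<omega> k =
     (if \<alpha> = \<infinity> then
        (if \<forall>j. j \<noteq> k \<longrightarrow> ppr_Ttilde Q P \<omega> k < ppr_Ttilde Q P \<omega> j then 1 else 0)
      else ppr_weight (real_of_ereal \<alpha>) Q P \<omega> k / (\<Sum>i. ppr_weight (real_of_ereal \<alpha>) Q P \<omega> i))"

text \<open>Pr(Z_K \<in> A) = E[ sum_k Pr(K = k | (Z_i,T_i)_i) * 1{Z_k \<in> A} ].\<close>
definition ppr_output_prob :: "ereal \<Rightarrow> 'z measure \<Rightarrow> 'z measure \<Rightarrow> 'z set \<Rightarrow> ennreal" where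
  "ppr_output_prob \<alpha> Q P A =
     (\<integral>\<^sup>+ \<omega>. (\<Sum>k. ppr_index_prob \<alpha> Q P \<omega> k * indicator A (fst \<omega> k)) \<partial>ppr_space Q)"

end

theory Submission
  imports Defs
begin

abbreviation EXP :: "real measure" where "EXP \<equiv> density lborel (exponential_density 1)"
abbreviation EE :: "(nat \<Rightarrow> real) measure" where "EE \<equiv> PiM UNIV (\<lambda>i::nat. EXP)"
abbreviation RS :: "(nat \<Rightarrow> real) measure" where "RS \<equiv> PiM UNIV (\<lambda>i::nat. (borel::real measure))"

definition pts :: "real \<Rightarrow> (nat \<Rightarrow> real) \<Rightarrow> nat \<Rightarrow> real" where
  "pts c e n = c + (\<Sum>j\<le>n. e j)"
definition dl :: "nat \<Rightarrow> (nat \<Rightarrow> 'a) \<Rightarrow> nat \<Rightarrow> 'a" where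
  "dl k f i = f (if i < k then i else Suc i)"

lemma prob_EXP: "prob_space EXP" by (rule prob_space_exponential_density) simp
lemma sets_EXP[measurable_cong]: "sets EXP = sets borel" by simp
lemma space_EXP[simp]: "space EXP = UNIV" by simp

lemma seq_space: "prob_space M \<Longrightarrow> sequence_space M"
  by (simp add: sequence_space_def product_prob_space_def product_sigma_finite_def
      product_prob_space_axioms_def prob_space_imp_sigma_finite)

lemma prob_PiM: "prob_space M \<Longrightarrow> prob_space (PiM UNIV (\<lambda>i::nat. M))"
  by (intro prob_space_PiM) auto

lemma iter_int:
  assumes M: "prob_space M" and f[measurable]: "f \<in> borel_measurable (PiM UNIV (\<lambda>i::nat. M))"
  shows "(\<integral>\<^sup>+\<omega>. f \<omega> \<partial>PiM UNIV (\<lambda>i::nat. M)) = (\<integral>\<^sup>+x. \<integral>\<^sup>+\<omega>. f (case_nat x \<omega>) \<partial>PiM UNIV (\<lambda>i::nat. M) \<partial>M)"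
proof -
  interpret sequence_space M using seq_space[OF M] .
  have "(\<integral>\<^sup>+\<omega>. f \<omega> \<partial>S) = (\<integral>\<^sup>+\<omega>. f \<omega> \<partial>distr (M \<Otimes>\<^sub>M S) S (\<lambda>(s, \<omega>). case_nat s \<omega>))"
    by (simp add: PiM_iter)
  also have "\<dots> = (\<integral>\<^sup>+z. f (case_nat (fst z) (snd z)) \<partial>(M \<Otimes>\<^sub>M S))"
    by (subst nn_integral_distr) (auto simp: split_beta')
  also have "\<dots> = (\<integral>\<^sup>+x. \<integral>\<^sup>+\<omega>. f (case_nat x \<omega>) \<partial>S \<partial>M)"
    by (subst sigma_finite_measure.nn_integral_fst[OF prob_space_imp_sigma_finite[OF prob_PiM[OF M]], symmetric]) auto
  finally show ?thesis .
qed

lemma nn_swap: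
  assumes "sigma_finite_measure M1" "sigma_finite_measure M2"
    and f: "(\<lambda>(x,y). f x y) \<in> borel_measurable (M1 \<Otimes>\<^sub>M M2)"
  shows "(\<integral>\<^sup>+x. \<integral>\<^sup>+y. f x y \<partial>M2 \<partial>M1) = (\<integral>\<^sup>+y. \<integral>\<^sup>+x. f x y \<partial>M1 \<partial>M2)"
proof -
  interpret pair_sigma_finite M1 M2 using assms by (simp add: pair_sigma_finite_def)
  show ?thesis using Fubini[OF f] by simp
qed

lemma pts_cons: "pts c (case_nat x e) = case_nat (c + x) (pts (c + x) e)"
proof
  fix n show "pts c (case_nat x e) n = case_nat (c + x) (pts (c + x) e) n"
    by (cases n) (simp_all add: pts_def sum.atMost_Suc_shift del: sum.atMost_Suc)
qed

lemma dl_0: "dl 0 (case_nat a f) = f" by (auto simp: dl_def fun_eq_iff)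
lemma dl_Suc: "dl (Suc k) (case_nat a f) = case_nat a (dl k f)"
  by (auto simp: dl_def fun_eq_iff split: nat.split)

lemma meas_pts[measurable]: "pts c \<in> measurable EE RS"
  unfolding pts_def
  by (rule measurable_PiM_single') auto

lemma meas_pts'[measurable]: "(\<lambda>e. pts c e n) \<in> borel_measurable EE"
  unfolding pts_def by measurable

lemma meas_dl[measurable]: "dl k \<in> measurable (PiM UNIV (\<lambda>i::nat. M)) (PiM UNIV (\<lambda>i::nat. M))"
  unfolding dl_def
  by (rule measurable_PiM_single') (auto simp: space_PiM)


abbreviation Dx :: "real \<Rightarrow> ennreal" where "Dx x \<equiv> ennreal (exponential_density 1 x)"

lemma int_EXP: "f \<in> borel_measurable borel \<Longrightarrow> (\<integral>\<^sup>+x. f x \<partial>EXP) = (\<integral>\<^sup>+x. Dx x * f x \<partial>lborel)"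
  by (subst nn_integral_density) auto

lemma Dx_add: "0 < u \<Longrightarrow> Dx (u + x) * (if 0 < x then v else 0) = Dx u * (Dx x * (if 0 < x then v else 0))"
  by (auto simp: exponential_density_def ennreal_mult'[symmetric] exp_add[symmetric] algebra_simps)

lemma shift_lborel: fixes f :: "real \<Rightarrow> ennreal" shows "f \<in> borel_measurable borel \<Longrightarrow> (\<integral>\<^sup>+x. f x \<partial>lborel) = (\<integral>\<^sup>+x. f (c + x) \<partial>lborel)"
  using nn_integral_real_affine[of f 1 c] by simp

lemma mem:
  fixes g :: "real \<Rightarrow> real \<Rightarrow> ennreal"
  assumes g[measurable]: "(\<lambda>(t,y). g t y) \<in> borel_measurable (borel \<Otimes>\<^sub>M borel)"
  shows "(\<integral>\<^sup>+x. \<integral>\<^sup>+x'. g (c+x) (c+x+x') \<partial>EXP \<partial>EXP)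
       = (\<integral>\<^sup>+t. indicator {c<..} t * \<integral>\<^sup>+x. (if t < c+x then g t (c+x) else 0) \<partial>EXP \<partial>lborel)"
proof -
  have "(\<integral>\<^sup>+t. indicator {c<..} t * \<integral>\<^sup>+x. (if t < c+x then g t (c+x) else 0) \<partial>EXP \<partial>lborel)
      = (\<integral>\<^sup>+t. indicator {c<..} t * \<integral>\<^sup>+x. Dx x * (if t < c+x then g t (c+x) else 0) \<partial>lborel \<partial>lborel)"
    by (subst int_EXP) auto
  also have "\<dots> = (\<integral>\<^sup>+u. indicator {c<..} (c+u) * \<integral>\<^sup>+x. Dx x * (if c+u < c+x then g (c+u) (c+x) else 0) \<partial>lborel \<partial>lborel)"
    by (subst shift_lborel[where c=c]) auto
  also have "\<dots> = (\<integral>\<^sup>+u. indicator {0<..} u * \<integral>\<^sup>+x'. Dx (u+x') * (if 0 < x' then g (c+u) (c+u+x') else 0) \<partial>lborel \<partial>lborel)"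
    apply (intro nn_integral_cong)
    subgoal for u by (subst shift_lborel[where c=u]) (auto simp: indicator_def ac_simps cong: if_cong)
    done
  also have "\<dots> = (\<integral>\<^sup>+u. indicator {0<..} u * (Dx u * \<integral>\<^sup>+x'. Dx x' * (if 0 < x' then g (c+u) (c+u+x') else 0) \<partial>lborel) \<partial>lborel)"
    apply (intro nn_integral_cong)
    apply (auto simp: indicator_def Dx_add nn_integral_cmult)
    done
  also have "\<dots> = (\<integral>\<^sup>+u. Dx u * \<integral>\<^sup>+x'. Dx x' * g (c+u) (c+u+x') \<partial>lborel \<partial>lborel)"
  proof (rule nn_integral_cong_AE)
    show "AE u in lborel. indicator {0<..} u * (Dx u * \<integral>\<^sup>+x'. Dx x' * (if 0 < x' then g (c+u) (c+u+x') else 0) \<partial>lborel)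
        = Dx u * \<integral>\<^sup>+x'. Dx x' * g (c+u) (c+u+x') \<partial>lborel"
      using AE_lborel_singleton[of 0]
    proof eventually_elim
      case (elim u)
      have "(\<integral>\<^sup>+x'. Dx x' * (if 0 < x' then g (c+u) (c+u+x') else 0) \<partial>lborel) = (\<integral>\<^sup>+x'. Dx x' * g (c+u) (c+u+x') \<partial>lborel)"
        by (intro nn_integral_cong_AE, use AE_lborel_singleton[of 0] in eventually_elim)
           (auto simp: exponential_density_def)
      with elim show ?case by (auto simp: indicator_def exponential_density_def)
    qed
  qed
  also have "\<dots> = (\<integral>\<^sup>+x. \<integral>\<^sup>+x'. g (c+x) (c+x+x') \<partial>EXP \<partial>EXP)"
    by (subst (1 2) int_EXP) auto
  finally show ?thesis ..
qed


lemma meas_pts2: "(\<lambda>w. pts (fst w) (snd w)) \<in> measurable (borel \<Otimes>\<^sub>M EE) RS"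
  unfolding pts_def
  by (rule measurable_PiM_single') auto

lemma meas_cn: "(\<lambda>w. case_nat (fst w) (snd w)) \<in> measurable (borel \<Otimes>\<^sub>M RS) RS"
proof (rule measurable_PiM_single')
  fix i show "(\<lambda>w. case_nat (fst w) (snd w) i) \<in> measurable (borel \<Otimes>\<^sub>M RS) borel"
    by (cases i) auto
qed auto

lemma meas_cn'[measurable (raw)]:
  "f \<in> borel_measurable N \<Longrightarrow> g \<in> measurable N RS \<Longrightarrow> (\<lambda>x. case_nat (f x) (g x)) \<in> measurable N RS"
  using measurable_compose[OF measurable_Pair meas_cn, of f N g] by simp

lemma meas_pts2'[measurable (raw)]:
  "f \<in> borel_measurable N \<Longrightarrow> g \<in> measurable N EE \<Longrightarrow> (\<lambda>x. pts (f x) (g x)) \<in> measurable N RS"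
  using measurable_compose[OF measurable_Pair meas_pts2, of f N g] by simp

lemma meas_pts3[measurable (raw)]:
  "f \<in> borel_measurable N \<Longrightarrow> g \<in> measurable N EE \<Longrightarrow> (\<lambda>x. pts (f x) (g x) j) \<in> borel_measurable N"
proof -
  assume f[measurable]: "f \<in> borel_measurable N" and g: "g \<in> measurable N EE"
  have [measurable]: "(\<lambda>x. g x i) \<in> borel_measurable N" for i
    using measurable_compose[OF g measurable_component_singleton[of i UNIV "\<lambda>_. EXP"]]
    by (simp add: measurable_cong_sets[OF refl sets_EXP])
  show ?thesis unfolding pts_def by measurable
qed

lemma sf_EE: "sigma_finite_measure EE"
  by (rule prob_space_imp_sigma_finite[OF prob_PiM[OF prob_EXP]])

lemmas nnI_EE[measurable (raw)] = sigma_finite_measure.borel_measurable_nn_integral[OF sf_EE]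

lemma iter_EE: "f \<in> borel_measurable EE \<Longrightarrow> (\<integral>\<^sup>+e. f e \<partial>EE) = (\<integral>\<^sup>+x. \<integral>\<^sup>+e. f (case_nat x e) \<partial>EE \<partial>EXP)"
  by (rule iter_int[OF prob_EXP])

lemma mecke_base:
  assumes h[measurable]: "h \<in> borel_measurable (borel \<Otimes>\<^sub>M RS)"
  shows "(\<integral>\<^sup>+e. h (pts c e 0, dl 0 (pts c e)) \<partial>EE)
       = (\<integral>\<^sup>+t. indicator {c<..} t * \<integral>\<^sup>+e. (if t < pts c e 0 then h (t, pts c e) else 0) \<partial>EE \<partial>lborel)"
proof -
  define g where "g t y = (\<integral>\<^sup>+e. h (t, case_nat y (pts y e)) \<partial>EE)" for t y
  have g[measurable]: "(\<lambda>(t,y). g t y) \<in> borel_measurable (borel \<Otimes>\<^sub>M borel)"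
    unfolding g_def split_beta'
    by (rule sigma_finite_measure.borel_measurable_nn_integral[OF sf_EE]) measurable
  have "(\<integral>\<^sup>+e. h (pts c e 0, dl 0 (pts c e)) \<partial>EE) = (\<integral>\<^sup>+x. \<integral>\<^sup>+e. h (c + x, pts (c+x) e) \<partial>EE \<partial>EXP)"
    by (subst iter_EE) (auto simp: pts_cons dl_0)
  also have "\<dots> = (\<integral>\<^sup>+x. \<integral>\<^sup>+x'. g (c+x) (c+x+x') \<partial>EXP \<partial>EXP)"
    by (intro nn_integral_cong, subst iter_EE) (auto simp: pts_cons g_def)
  also have "\<dots> = (\<integral>\<^sup>+t. indicator {c<..} t * \<integral>\<^sup>+x. (if t < c+x then g t (c+x) else 0) \<partial>EXP \<partial>lborel)"
    by (rule mem[OF g])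
  also have "\<dots> = (\<integral>\<^sup>+t. indicator {c<..} t * \<integral>\<^sup>+e. (if t < pts c e 0 then h (t, pts c e) else 0) \<partial>EE \<partial>lborel)"
  proof (intro nn_integral_cong)
    fix t
    have "(\<integral>\<^sup>+e. (if t < pts c e 0 then h (t, pts c e) else 0) \<partial>EE)
       = (\<integral>\<^sup>+x. \<integral>\<^sup>+e. (if t < c + x then h (t, case_nat (c+x) (pts (c+x) e)) else 0) \<partial>EE \<partial>EXP)"
      by (subst iter_EE) (auto simp: pts_cons cong: if_cong)
    also have "\<dots> = (\<integral>\<^sup>+x. (if t < c+x then g t (c+x) else 0) \<partial>EXP)"
      by (intro nn_integral_cong) (auto simp: g_def)
    finally show "indicator {c<..} t * (\<integral>\<^sup>+x. (if t < c+x then g t (c+x) else 0) \<partial>EXP) =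
      indicator {c<..} t * (\<integral>\<^sup>+e. (if t < pts c e 0 then h (t, pts c e) else 0) \<partial>EE)" by simp
  qed
  finally show ?thesis .
qed


lemma ex_le_Suc': "(\<exists>j\<le>Suc n. P j) \<longleftrightarrow> P 0 \<or> (\<exists>j\<le>n. P (Suc j))"
  apply auto
  subgoal for j by (cases j) auto
  done

lemma ex_pts_cons: "(\<exists>j\<le>Suc n. t < pts c (case_nat x e) j) \<longleftrightarrow> t < c + x \<or> (\<exists>j\<le>n. t < pts (c+x) e j)"
  by (simp add: ex_le_Suc' pts_cons)

lemma sf_EXP: "sigma_finite_measure EXP"
  by (rule prob_space_imp_sigma_finite[OF prob_EXP])

lemma AE_EXP_nonneg: "AE x in EXP. 0 \<le> x"
  by (subst AE_density) (auto simp: exponential_density_def)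

lemma if_split_add: "(if A \<or> B then v else 0) = (if A then v else 0) + (if \<not> A \<and> B then (v::ennreal) else 0)"
  by auto

lemma mecke_n:
  assumes h: "h \<in> borel_measurable (borel \<Otimes>\<^sub>M RS)"
  shows "(\<Sum>k<Suc n. \<integral>\<^sup>+e. h (pts c e k, dl k (pts c e)) \<partial>EE)
       = (\<integral>\<^sup>+t. indicator {c<..} t * \<integral>\<^sup>+e. (if \<exists>j\<le>n. t < pts c e j then h (t, pts c e) else 0) \<partial>EE \<partial>lborel)"
  using h
proof (induction n arbitrary: c h)
  case 0
  then show ?case using mecke_base[OF 0] by simp
next
  case (Suc n)
  note h[measurable] = Suc.prems
  define I where "I x t = (\<integral>\<^sup>+e. (if \<exists>j\<le>n. t < pts (c+x) e j then h (t, case_nat (c+x) (pts (c+x) e)) else 0) \<partial>EE)" for x t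
  have I[measurable]: "(\<lambda>(x,t). I x t) \<in> borel_measurable (borel \<Otimes>\<^sub>M borel)"
    unfolding I_def split_beta'
    by (rule sigma_finite_measure.borel_measurable_nn_integral[OF sf_EE]) measurable
  have "(\<Sum>k<Suc (Suc n). \<integral>\<^sup>+e. h (pts c e k, dl k (pts c e)) \<partial>EE)
     = (\<integral>\<^sup>+e. h (pts c e 0, dl 0 (pts c e)) \<partial>EE) + (\<Sum>k<Suc n. \<integral>\<^sup>+e. h (pts c e (Suc k), dl (Suc k) (pts c e)) \<partial>EE)"
    by (simp only: sum.lessThan_Suc_shift)
  also have "(\<Sum>k<Suc n. \<integral>\<^sup>+e. h (pts c e (Suc k), dl (Suc k) (pts c e)) \<partial>EE)
     = (\<Sum>k<Suc n. \<integral>\<^sup>+x. \<integral>\<^sup>+e. h (pts (c+x) e k, case_nat (c+x) (dl k (pts (c+x) e))) \<partial>EE \<partial>EXP)"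
    by (intro sum.cong refl, subst iter_EE) (auto simp: pts_cons dl_Suc)
  also have "\<dots> = (\<integral>\<^sup>+x. (\<Sum>k<Suc n. \<integral>\<^sup>+e. h (pts (c+x) e k, case_nat (c+x) (dl k (pts (c+x) e))) \<partial>EE) \<partial>EXP)"
    by (rule nn_integral_sum[symmetric]) measurable
  also have "\<dots> = (\<integral>\<^sup>+x. \<integral>\<^sup>+t. indicator {c+x<..} t * I x t \<partial>lborel \<partial>EXP)"
  proof (intro nn_integral_cong)
    fix x
    have hx: "(\<lambda>w. h (fst w, case_nat (c+x) (snd w))) \<in> borel_measurable (borel \<Otimes>\<^sub>M RS)" by measurable
    show "(\<Sum>k<Suc n. \<integral>\<^sup>+e. h (pts (c+x) e k, case_nat (c+x) (dl k (pts (c+x) e))) \<partial>EE) = (\<integral>\<^sup>+t. indicator {c+x<..} t * I x t \<partial>lborel)"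
      using Suc.IH[OF hx, of "c+x"] by (simp add: I_def cong: if_cong)
  qed
  finally have L: "(\<Sum>k<Suc (Suc n). \<integral>\<^sup>+e. h (pts c e k, dl k (pts c e)) \<partial>EE)
     = (\<integral>\<^sup>+e. h (pts c e 0, dl 0 (pts c e)) \<partial>EE) + (\<integral>\<^sup>+x. \<integral>\<^sup>+t. indicator {c+x<..} t * I x t \<partial>lborel \<partial>EXP)" .

  have R1: "(\<integral>\<^sup>+t. indicator {c<..} t * \<integral>\<^sup>+e. (if \<exists>j\<le>Suc n. t < pts c e j then h (t, pts c e) else 0) \<partial>EE \<partial>lborel)
    = (\<integral>\<^sup>+t. indicator {c<..} t * \<integral>\<^sup>+e. (if t < pts c e 0 then h (t, pts c e) else 0) \<partial>EE \<partial>lborel)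
    + (\<integral>\<^sup>+t. indicator {c<..} t * \<integral>\<^sup>+e. (if \<not> t < pts c e 0 \<and> (\<exists>j\<le>n. t < pts c e (Suc j)) then h (t, pts c e) else 0) \<partial>EE \<partial>lborel)"
  proof -
    have eq: "(if \<exists>j\<le>Suc n. t < pts c e j then h (t, pts c e) else 0)
      = (if t < pts c e 0 then h (t, pts c e) else 0) + (if \<not> t < pts c e 0 \<and> (\<exists>j\<le>n. t < pts c e (Suc j)) then h (t, pts c e) else 0)" for t e
      by (simp only: ex_le_Suc' if_split_add)
    show ?thesis
      apply (simp only: eq)
      apply (subst nn_integral_add, measurable)
      apply (simp only: distrib_left)
      apply (subst nn_integral_add, measurable)
      done
  qed
  have R2: "(\<integral>\<^sup>+t. indicator {c<..} t * \<integral>\<^sup>+e. (if t < pts c e 0 then h (t, pts c e) else 0) \<partial>EE \<partial>lborel)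
      = (\<integral>\<^sup>+e. h (pts c e 0, dl 0 (pts c e)) \<partial>EE)"
    using mecke_base[OF h] by simp
  have "(\<integral>\<^sup>+t. indicator {c<..} t * \<integral>\<^sup>+e. (if \<not> t < pts c e 0 \<and> (\<exists>j\<le>n. t < pts c e (Suc j)) then h (t, pts c e) else 0) \<partial>EE \<partial>lborel)
     = (\<integral>\<^sup>+t. indicator {c<..} t * \<integral>\<^sup>+x. (if c + x \<le> t then I x t else 0) \<partial>EXP \<partial>lborel)"
  proof (intro nn_integral_cong arg_cong2[where f="(*)"] refl)
    fix t
    show "(\<integral>\<^sup>+e. (if \<not> t < pts c e 0 \<and> (\<exists>j\<le>n. t < pts c e (Suc j)) then h (t, pts c e) else 0) \<partial>EE)
      = (\<integral>\<^sup>+x. (if c + x \<le> t then I x t else 0) \<partial>EXP)"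
      by (subst iter_EE, measurable, intro nn_integral_cong) (auto simp: pts_cons I_def not_less cong: if_cong)
  qed
  also have "\<dots> = (\<integral>\<^sup>+t. \<integral>\<^sup>+x. indicator {c<..} t * (if c + x \<le> t then I x t else 0) \<partial>EXP \<partial>lborel)"
    by (intro nn_integral_cong nn_integral_cmult[symmetric]) measurable
  also have "\<dots> = (\<integral>\<^sup>+x. \<integral>\<^sup>+t. indicator {c<..} t * (if c + x \<le> t then I x t else 0) \<partial>lborel \<partial>EXP)"
    by (rule nn_swap[OF lborel.sigma_finite_measure_axioms sf_EXP]) measurable
  also have "\<dots> = (\<integral>\<^sup>+x. \<integral>\<^sup>+t. indicator {c+x<..} t * I x t \<partial>lborel \<partial>EXP)"
  proof (rule nn_integral_cong_AE)
    show "AE x in EXP. (\<integral>\<^sup>+t. indicator {c<..} t * (if c + x \<le> t then I x t else 0) \<partial>lborel) = (\<integral>\<^sup>+t. indicator {c+x<..} t * I x t \<partial>lborel)"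
      using AE_EXP_nonneg
    proof eventually_elim
      case (elim x)
      show ?case
        by (rule nn_integral_cong_AE, use AE_lborel_singleton[of "c+x"] in eventually_elim)
           (use elim in \<open>auto simp: indicator_def\<close>)
    qed
  qed
  finally have R3: "(\<integral>\<^sup>+t. indicator {c<..} t * \<integral>\<^sup>+e. (if \<not> t < pts c e 0 \<and> (\<exists>j\<le>n. t < pts c e (Suc j)) then h (t, pts c e) else 0) \<partial>EE \<partial>lborel) = (\<integral>\<^sup>+x. \<integral>\<^sup>+t. indicator {c+x<..} t * I x t \<partial>lborel \<partial>EXP)" .
  show ?case unfolding L R1 R2 R3 ..
qed


lemma exp_sq: fixes x :: real shows "exp (- x) * exp (- x) = exp (- (x * 2))"
  by (simp add: mult_exp_exp)

lemma ennreal_half: "ennreal (a / 2) = ennreal a * inverse 2"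
proof (cases "0 \<le> a")
  case True
  then show ?thesis using divide_ennreal[of a 2] by (simp add: divide_ennreal_def)
next
  case False
  then show ?thesis by (simp add: ennreal_neg)
qed

lemma half_EXP: "(\<integral>\<^sup>+x. ennreal (exp (- x)) \<partial>EXP) = ennreal (1/2)"
proof -
  have "(\<integral>\<^sup>+x. ennreal (exp (- x)) \<partial>EXP) = (\<integral>\<^sup>+x. Dx x * ennreal (exp (- x)) \<partial>lborel)"
    by (rule int_EXP) simp
  also have "\<dots> = (\<integral>\<^sup>+x. ennreal (exponential_density 2 x * (1/2)) \<partial>lborel)"
  proof (intro nn_integral_cong)
    fix x :: real
    show "Dx x * ennreal (exp (- x)) = ennreal (exponential_density 2 x * (1/2))"
      by (cases "x < 0") (simp_all add: exponential_density_def ennreal_mult'[symmetric] exp_sq)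
  qed
  also have "\<dots> = (\<integral>\<^sup>+x. ennreal (exponential_density 2 x) * ennreal (1/2) \<partial>lborel)"
    by (intro nn_integral_cong) (simp add: ennreal_half)
  also have "\<dots> = (\<integral>\<^sup>+x. ennreal (exponential_density 2 x) \<partial>lborel) * ennreal (1/2)"
    by (rule nn_integral_multc) simp
  also have "(\<integral>\<^sup>+x. ennreal (exponential_density 2 x) \<partial>lborel) = 1"
  proof -
    interpret prob_space "density lborel (exponential_density 2)"
      by (rule prob_space_exponential_density) simp
    show ?thesis using emeasure_space_1 by (simp add: emeasure_density)
  qed
  finally show ?thesis by simp
qed

lemma step_EXP: "(\<integral>\<^sup>+x. ennreal (exp (- (c + x))) * K \<partial>EXP) = ennreal (exp (- c)) * K * ennreal (1/2)"
proof -
  have e: "exp (- (c + x)) = exp (- x) * exp (- c)" for x by (simp add: mult_exp_exp)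
  have "(\<integral>\<^sup>+x. ennreal (exp (- (c + x))) * K \<partial>EXP) = (\<integral>\<^sup>+x. ennreal (exp (- x)) * (ennreal (exp (- c)) * K) \<partial>EXP)"
    by (intro nn_integral_cong) (simp only: e ennreal_mult' exp_ge_zero mult_ac)
  also have "\<dots> = (\<integral>\<^sup>+x. ennreal (exp (- x)) \<partial>EXP) * (ennreal (exp (- c)) * K)"
    by (rule nn_integral_multc) simp
  finally show ?thesis by (simp add: half_EXP mult_ac)
qed

lemma lap: "(\<integral>\<^sup>+e. ennreal (exp (- pts c e n)) \<partial>EE) = ennreal (exp (- c) * (1/2) ^ Suc n)"
proof (induction n arbitrary: c)
  case 0
  have "(\<integral>\<^sup>+e. ennreal (exp (- pts c e 0)) \<partial>EE) = (\<integral>\<^sup>+x. \<integral>\<^sup>+e. ennreal (exp (- (c + x))) \<partial>EE \<partial>EXP)"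
    by (subst iter_EE) (auto simp: pts_cons)
  also have "\<dots> = (\<integral>\<^sup>+x. ennreal (exp (- (c + x))) * 1 \<partial>EXP)"
    using prob_space.emeasure_space_1[OF prob_PiM[OF prob_EXP]] by (simp del: minus_add_distrib)
  also have "\<dots> = ennreal (exp (- c)) * 1 * ennreal (1/2)" by (rule step_EXP)
  finally show ?case by (simp add: ennreal_half)
next
  case (Suc n)
  have "(\<integral>\<^sup>+e. ennreal (exp (- pts c e (Suc n))) \<partial>EE) = (\<integral>\<^sup>+x. \<integral>\<^sup>+e. ennreal (exp (- pts (c+x) e n)) \<partial>EE \<partial>EXP)"
    by (subst iter_EE) (auto simp: pts_cons)
  also have "\<dots> = (\<integral>\<^sup>+x. ennreal (exp (- (c + x))) * ennreal ((1/2) ^ Suc n) \<partial>EXP)"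
    by (simp only: Suc.IH ennreal_mult' exp_ge_zero)
  also have "\<dots> = ennreal (exp (- c)) * ennreal ((1/2) ^ Suc n) * ennreal (1/2)" by (rule step_EXP)
  also have "\<dots> = ennreal (exp (- c) * (1/2) ^ Suc n * (1/2))"
  proof -
    have a: "ennreal (exp (-c) * (1/2)^Suc n) = ennreal (exp (- c)) * ennreal ((1/2) ^ Suc n)" by (rule ennreal_mult') simp
    have b: "ennreal (exp (-c) * (1/2)^Suc n * (1/2)) = ennreal (exp (-c) * (1/2)^Suc n) * ennreal (1/2)" by (rule ennreal_mult') simp
    show ?thesis unfolding b a ..
  qed
  finally show ?case by (simp add: power_Suc2 mult_ac)
qed

lemma unbounded_m: "AE e in EE. \<exists>j. real m < pts 0 e j"
proof -
  define B where "B = {e \<in> space EE. \<forall>j. pts 0 e j \<le> real m}"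
  have B[measurable]: "B \<in> sets EE" unfolding B_def by measurable
  have le: "emeasure EE B \<le> ennreal (exp (real m) * (1/2) ^ Suc n)" for n
  proof -
    have "emeasure EE B = (\<integral>\<^sup>+e. indicator B e \<partial>EE)" by simp
    also have "\<dots> \<le> (\<integral>\<^sup>+e. ennreal (exp (real m)) * ennreal (exp (- pts 0 e n)) \<partial>EE)"
    proof (intro nn_integral_mono)
      fix e assume "e \<in> space EE"
      show "indicator B e \<le> ennreal (exp (real m)) * ennreal (exp (- pts 0 e n))"
      proof (cases "e \<in> B")
        case True
        then have "pts 0 e n \<le> real m" by (auto simp: B_def)
        then have "1 \<le> exp (real m) * exp (- pts 0 e n)"
          by (simp add: exp_add[symmetric])
        then show ?thesis using True by (simp add: ennreal_mult'[symmetric])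
      qed simp
    qed
    also have "\<dots> = ennreal (exp (real m) * (exp 0 * (1/2) ^ Suc n))"
      by (subst nn_integral_cmult) (auto simp: lap[of 0, simplified] ennreal_mult'[symmetric])
    also have "\<dots> = ennreal (exp (real m) * (1/2) ^ Suc n)" by simp
    finally show ?thesis .
  qed
  have "(\<lambda>n. (1/2::real) ^ n) \<longlonglongrightarrow> 0" by (rule LIMSEQ_realpow_zero) auto
  then have "(\<lambda>n. (1/2::real) ^ Suc n) \<longlonglongrightarrow> 0" by (rule LIMSEQ_Suc)
  then have "(\<lambda>n. exp (real m) * (1/2::real) ^ Suc n) \<longlonglongrightarrow> exp (real m) * 0" by (intro tendsto_intros)
  then have lim: "(\<lambda>n. ennreal (exp (real m) * (1/2) ^ Suc n)) \<longlonglongrightarrow> ennreal 0"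
    by (intro tendsto_ennrealI) simp
  have "emeasure EE B \<le> ennreal 0"
    by (rule LIMSEQ_le_const[OF lim]) (use le in auto)
  then have "B \<in> null_sets EE" by (simp add: null_sets_def B)
  then show ?thesis by (rule AE_I') (force simp: B_def not_less)
qed

lemma unbounded: "AE e in EE. \<forall>t. \<exists>j. t < pts c e j"
proof -
  have "AE e in EE. \<forall>m. \<exists>j. real m < pts 0 e j"
    by (subst AE_all_countable) (auto intro: unbounded_m)
  then show ?thesis
  proof eventually_elim
    case (elim e)
    show ?case
    proof
      fix t
      obtain m :: nat where "t - c < real m" using reals_Archimedean2 by blast
      with elim obtain j where "real m < pts 0 e j" by blast
      with \<open>t - c < real m\<close> show "\<exists>j. t < pts c e j" by (auto simp: pts_def intro!: exI[of _ j])
    qed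
  qed
qed


lemma mecke:
  assumes h[measurable]: "h \<in> borel_measurable (borel \<Otimes>\<^sub>M RS)"
  shows "(\<Sum>k. \<integral>\<^sup>+e. h (pts c e k, dl k (pts c e)) \<partial>EE) = (\<integral>\<^sup>+t. indicator {c<..} t * \<integral>\<^sup>+e. h (t, pts c e) \<partial>EE \<partial>lborel)"
proof -
  define f where "f k = (\<integral>\<^sup>+e. h (pts c e k, dl k (pts c e)) \<partial>EE)" for k
  define G where "G n t e = (if \<exists>j\<le>n. t < pts c e j then h (t, pts c e) else 0)" for n t e
  have Gm[measurable]: "(\<lambda>e. G n t e) \<in> borel_measurable EE" for n t unfolding G_def by measurable
  have Gm2[measurable]: "(\<lambda>w. G n (fst w) (snd w)) \<in> borel_measurable (borel \<Otimes>\<^sub>M EE)" for n unfolding G_def by measurable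
  have Ginc: "G n t e \<le> G m t e" if "n \<le> m" for n m t e
    using that by (auto simp: G_def)
  have "(\<Sum>k. f k) = (SUP n. \<Sum>k<n. f k)" by (rule suminf_eq_SUP)
  also have "\<dots> = (SUP n. \<Sum>k<Suc n. f k)"
  proof (rule SUP_eq)
    show "\<exists>j\<in>UNIV. (\<Sum>k<i. f k) \<le> (\<Sum>k<Suc j. f k)" for i
      by (intro bexI[of _ i] sum_mono2) auto
    show "\<exists>i\<in>UNIV. (\<Sum>k<Suc j. f k) \<le> (\<Sum>k<i. f k)" for j
      by (intro bexI[of _ "Suc j"]) auto
  qed
  also have "\<dots> = (SUP n. \<integral>\<^sup>+t. indicator {c<..} t * \<integral>\<^sup>+e. G n t e \<partial>EE \<partial>lborel)"
    unfolding f_def G_def using mecke_n[OF h] by simp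
  also have "\<dots> = (\<integral>\<^sup>+t. (SUP n. indicator {c<..} t * \<integral>\<^sup>+e. G n t e \<partial>EE) \<partial>lborel)"
  proof (rule nn_integral_monotone_convergence_SUP[symmetric])
    show "incseq (\<lambda>n t. indicator {c<..} t * \<integral>\<^sup>+e. G n t e \<partial>EE)"
      by (auto simp: incseq_def le_fun_def intro!: mult_left_mono nn_integral_mono Ginc)
  qed measurable
  also have "\<dots> = (\<integral>\<^sup>+t. indicator {c<..} t * \<integral>\<^sup>+e. (SUP n. G n t e) \<partial>EE \<partial>lborel)"
  proof (intro nn_integral_cong)
    fix t
    have "(\<integral>\<^sup>+e. (SUP n. G n t e) \<partial>EE) = (SUP n. \<integral>\<^sup>+e. G n t e \<partial>EE)"
      by (rule nn_integral_monotone_convergence_SUP) (auto simp: incseq_def le_fun_def intro!: Ginc)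
    then show "(SUP n. indicator {c<..} t * \<integral>\<^sup>+e. G n t e \<partial>EE) = indicator {c<..} t * \<integral>\<^sup>+e. (SUP n. G n t e) \<partial>EE"
      by (simp add: SUP_mult_left_ennreal)
  qed
  also have "\<dots> = (\<integral>\<^sup>+t. indicator {c<..} t * \<integral>\<^sup>+e. h (t, pts c e) \<partial>EE \<partial>lborel)"
  proof (rule nn_integral_cong)
    fix t
    have "AE e in EE. (SUP n. G n t e) = h (t, pts c e)"
      using unbounded[of c]
    proof eventually_elim
      case (elim e)
      then obtain j where j: "t < pts c e j" by blast
      show ?case
      proof (rule antisym)
        show "(SUP n. G n t e) \<le> h (t, pts c e)" by (intro SUP_least) (auto simp: G_def)
        show "h (t, pts c e) \<le> (SUP n. G n t e)" by (rule SUP_upper2[of j]) (use j in \<open>auto simp: G_def\<close>)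
      qed
    qed
    then have "(\<integral>\<^sup>+e. (SUP n. G n t e) \<partial>EE) = (\<integral>\<^sup>+e. h (t, pts c e) \<partial>EE)"
      by (rule nn_integral_cong_AE)
    then show "indicator {c<..} t * (\<integral>\<^sup>+e. (SUP n. G n t e) \<partial>EE) = indicator {c<..} t * (\<integral>\<^sup>+e. h (t, pts c e) \<partial>EE)"
      by simp
  qed
  finally show ?thesis unfolding f_def .
qed

lemma meas_cn_gen: "(\<lambda>w. case_nat (fst w) (snd w)) \<in> measurable (M \<Otimes>\<^sub>M PiM UNIV (\<lambda>_::nat. M)) (PiM UNIV (\<lambda>_. M))"
proof (rule measurable_PiM_single')
  fix i show "(\<lambda>w. case_nat (fst w) (snd w) i) \<in> measurable (M \<Otimes>\<^sub>M PiM UNIV (\<lambda>_::nat. M)) M"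
    by (cases i) auto
qed (auto simp: space_pair_measure space_PiM PiE_iff split: nat.split)

lemma meas_cn_gen'[measurable (raw)]:
  "f \<in> measurable N M \<Longrightarrow> g \<in> measurable N (PiM UNIV (\<lambda>_::nat. M)) \<Longrightarrow> (\<lambda>x. case_nat (f x) (g x)) \<in> measurable N (PiM UNIV (\<lambda>_. M))"
  using measurable_compose[OF measurable_Pair meas_cn_gen, of f N M g] by simp

lemma pair_snd:
  assumes "sigma_finite_measure M1" "sigma_finite_measure M2" "f \<in> borel_measurable (M1 \<Otimes>\<^sub>M M2)"
  shows "(\<integral>\<^sup>+w. f w \<partial>(M1 \<Otimes>\<^sub>M M2)) = (\<integral>\<^sup>+y. \<integral>\<^sup>+x. f (x, y) \<partial>M1 \<partial>M2)"
proof -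
  interpret pair_sigma_finite M1 M2 using assms by (simp add: pair_sigma_finite_def)
  show ?thesis using nn_integral_snd[OF assms(3)] by simp
qed

lemma pair_fst:
  assumes "sigma_finite_measure M2" "f \<in> borel_measurable (M1 \<Otimes>\<^sub>M M2)"
  shows "(\<integral>\<^sup>+w. f w \<partial>(M1 \<Otimes>\<^sub>M M2)) = (\<integral>\<^sup>+x. \<integral>\<^sup>+y. f (x, y) \<partial>M2 \<partial>M1)"
  using sigma_finite_measure.nn_integral_fst[OF assms] by simp

lemma zdel:
  assumes M: "prob_space M" and F: "F \<in> borel_measurable (M \<Otimes>\<^sub>M PiM UNIV (\<lambda>_::nat. M))"
  shows "(\<integral>\<^sup>+zs. F (zs k, dl k zs) \<partial>PiM UNIV (\<lambda>_. M)) = (\<integral>\<^sup>+z. \<integral>\<^sup>+zs. F (z, zs) \<partial>PiM UNIV (\<lambda>_. M) \<partial>M)"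
  using F
proof (induction k arbitrary: F)
  have sfP: "sigma_finite_measure (PiM UNIV (\<lambda>_::nat. M))"
    by (rule prob_space_imp_sigma_finite[OF prob_PiM[OF M]])
  note [measurable (raw)] = sigma_finite_measure.borel_measurable_nn_integral[OF sfP]
  case 0
  note [measurable] = "0.prems"
  show ?case by (subst iter_int[OF M]) (auto simp: dl_0)
next
  have sfP: "sigma_finite_measure (PiM UNIV (\<lambda>_::nat. M))"
    by (rule prob_space_imp_sigma_finite[OF prob_PiM[OF M]])
  have sfM: "sigma_finite_measure M" by (rule prob_space_imp_sigma_finite[OF M])
  note [measurable (raw)] = sigma_finite_measure.borel_measurable_nn_integral[OF sfP]
    sigma_finite_measure.borel_measurable_nn_integral[OF sfM]
  case (Suc k)
  note [measurable] = Suc.prems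
  have "(\<integral>\<^sup>+zs. F (zs (Suc k), dl (Suc k) zs) \<partial>PiM UNIV (\<lambda>_. M))
      = (\<integral>\<^sup>+x. \<integral>\<^sup>+zs. F (zs k, case_nat x (dl k zs)) \<partial>PiM UNIV (\<lambda>_. M) \<partial>M)"
    by (subst iter_int[OF M]) (auto simp: dl_Suc)
  also have "\<dots> = (\<integral>\<^sup>+x. \<integral>\<^sup>+z. \<integral>\<^sup>+zs. F (z, case_nat x zs) \<partial>PiM UNIV (\<lambda>_. M) \<partial>M \<partial>M)"
  proof (intro nn_integral_cong)
    fix x assume "x \<in> space M"
    then have Fx: "(\<lambda>w. F (fst w, case_nat x (snd w))) \<in> borel_measurable (M \<Otimes>\<^sub>M PiM UNIV (\<lambda>_::nat. M))"
      by measurable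
    show "(\<integral>\<^sup>+zs. F (zs k, case_nat x (dl k zs)) \<partial>PiM UNIV (\<lambda>_. M)) = (\<integral>\<^sup>+z. \<integral>\<^sup>+zs. F (z, case_nat x zs) \<partial>PiM UNIV (\<lambda>_. M) \<partial>M)"
      using Suc.IH[OF Fx] by simp
  qed
  also have "\<dots> = (\<integral>\<^sup>+z. \<integral>\<^sup>+x. \<integral>\<^sup>+zs. F (z, case_nat x zs) \<partial>PiM UNIV (\<lambda>_. M) \<partial>M \<partial>M)"
    by (rule nn_swap[OF sfM sfM]) measurable
  also have "\<dots> = (\<integral>\<^sup>+z. \<integral>\<^sup>+zs. F (z, zs) \<partial>PiM UNIV (\<lambda>_. M) \<partial>M)"
    by (intro nn_integral_cong, subst iter_int[OF M]) auto
  finally show ?case .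
qed


lemma pipe:
  assumes Q: "prob_space Q"
    and g[measurable]: "g \<in> borel_measurable (borel \<Otimes>\<^sub>M (Q \<Otimes>\<^sub>M (RS \<Otimes>\<^sub>M PiM UNIV (\<lambda>_::nat. Q))))"
  shows "(\<Sum>k. \<integral>\<^sup>+\<omega>. g (pts 0 (snd \<omega>) k, fst \<omega> k, dl k (pts 0 (snd \<omega>)), dl k (fst \<omega>)) \<partial>(PiM UNIV (\<lambda>_. Q) \<Otimes>\<^sub>M EE))
       = (\<integral>\<^sup>+t. indicator {0<..} t * \<integral>\<^sup>+z. \<integral>\<^sup>+\<omega>. g (t, z, pts 0 (snd \<omega>), fst \<omega>) \<partial>(PiM UNIV (\<lambda>_. Q) \<Otimes>\<^sub>M EE) \<partial>Q \<partial>lborel)"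
proof -
  have sfP: "sigma_finite_measure (PiM UNIV (\<lambda>_::nat. Q))"
    by (rule prob_space_imp_sigma_finite[OF prob_PiM[OF Q]])
  have sfQ: "sigma_finite_measure Q" by (rule prob_space_imp_sigma_finite[OF Q])
  have sfPE: "sigma_finite_measure (PiM UNIV (\<lambda>_::nat. Q) \<Otimes>\<^sub>M EE)"
    by (rule prob_space_imp_sigma_finite, rule prob_space_pair[OF prob_PiM[OF Q] prob_PiM[OF prob_EXP]]) 
  note [measurable (raw)] = sigma_finite_measure.borel_measurable_nn_integral[OF sfP]
    sigma_finite_measure.borel_measurable_nn_integral[OF sfQ]
    sigma_finite_measure.borel_measurable_nn_integral[OF sfPE]
  define H where "H w = (\<integral>\<^sup>+z. \<integral>\<^sup>+zs. g (fst w, z, snd w, zs) \<partial>PiM UNIV (\<lambda>_. Q) \<partial>Q)" for w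
  have H[measurable]: "H \<in> borel_measurable (borel \<Otimes>\<^sub>M RS)" unfolding H_def by measurable
  have step1: "(\<integral>\<^sup>+\<omega>. g (pts 0 (snd \<omega>) k, fst \<omega> k, dl k (pts 0 (snd \<omega>)), dl k (fst \<omega>)) \<partial>(PiM UNIV (\<lambda>_. Q) \<Otimes>\<^sub>M EE))
     = (\<integral>\<^sup>+e. H (pts 0 e k, dl k (pts 0 e)) \<partial>EE)" for k
  proof -
    have "(\<integral>\<^sup>+\<omega>. g (pts 0 (snd \<omega>) k, fst \<omega> k, dl k (pts 0 (snd \<omega>)), dl k (fst \<omega>)) \<partial>(PiM UNIV (\<lambda>_. Q) \<Otimes>\<^sub>M EE))
      = (\<integral>\<^sup>+e. \<integral>\<^sup>+zs. g (pts 0 e k, zs k, dl k (pts 0 e), dl k zs) \<partial>PiM UNIV (\<lambda>_. Q) \<partial>EE)"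
      by (subst pair_snd[OF sfP sf_EE]) auto
    also have "\<dots> = (\<integral>\<^sup>+e. H (pts 0 e k, dl k (pts 0 e)) \<partial>EE)"
    proof (intro nn_integral_cong)
      fix e
      have F: "(\<lambda>w. g (pts 0 e k, fst w, dl k (pts 0 e), snd w)) \<in> borel_measurable (Q \<Otimes>\<^sub>M PiM UNIV (\<lambda>_::nat. Q))"
        by measurable (auto simp: space_PiM intro: measurable_snd)
      show "(\<integral>\<^sup>+zs. g (pts 0 e k, zs k, dl k (pts 0 e), dl k zs) \<partial>PiM UNIV (\<lambda>_. Q)) = H (pts 0 e k, dl k (pts 0 e))"
        using zdel[OF Q F, of k] by (simp add: H_def)
    qed
    finally show ?thesis .
  qed
  have "(\<Sum>k. \<integral>\<^sup>+\<omega>. g (pts 0 (snd \<omega>) k, fst \<omega> k, dl k (pts 0 (snd \<omega>)), dl k (fst \<omega>)) \<partial>(PiM UNIV (\<lambda>_. Q) \<Otimes>\<^sub>M EE))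
     = (\<Sum>k. \<integral>\<^sup>+e. H (pts 0 e k, dl k (pts 0 e)) \<partial>EE)"
    by (simp only: step1)
  also have "\<dots> = (\<integral>\<^sup>+t. indicator {0<..} t * \<integral>\<^sup>+e. H (t, pts 0 e) \<partial>EE \<partial>lborel)"
    by (rule mecke[OF H])
  also have "\<dots> = (\<integral>\<^sup>+t. indicator {0<..} t * \<integral>\<^sup>+z. \<integral>\<^sup>+\<omega>. g (t, z, pts 0 (snd \<omega>), fst \<omega>) \<partial>(PiM UNIV (\<lambda>_. Q) \<Otimes>\<^sub>M EE) \<partial>Q \<partial>lborel)"
  proof (intro nn_integral_cong arg_cong2[where f="(*)"] refl)
    fix t :: real
    have "(\<integral>\<^sup>+e. H (t, pts 0 e) \<partial>EE) = (\<integral>\<^sup>+e. \<integral>\<^sup>+z. \<integral>\<^sup>+zs. g (t, z, pts 0 e, zs) \<partial>PiM UNIV (\<lambda>_. Q) \<partial>Q \<partial>EE)"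
      by (simp add: H_def)
    also have "\<dots> = (\<integral>\<^sup>+z. \<integral>\<^sup>+e. \<integral>\<^sup>+zs. g (t, z, pts 0 e, zs) \<partial>PiM UNIV (\<lambda>_. Q) \<partial>EE \<partial>Q)"
      by (rule nn_swap[OF sf_EE sfQ]) measurable
    also have "\<dots> = (\<integral>\<^sup>+z. \<integral>\<^sup>+\<omega>. g (t, z, pts 0 (snd \<omega>), fst \<omega>) \<partial>(PiM UNIV (\<lambda>_. Q) \<Otimes>\<^sub>M EE) \<partial>Q)"
      by (intro nn_integral_cong, subst pair_snd[OF sfP sf_EE]) auto
    finally show "(\<integral>\<^sup>+e. H (t, pts 0 e) \<partial>EE) = (\<integral>\<^sup>+z. \<integral>\<^sup>+\<omega>. g (t, z, pts 0 (snd \<omega>), fst \<omega>) \<partial>(PiM UNIV (\<lambda>_. Q) \<Otimes>\<^sub>M EE) \<partial>Q)" .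
  qed
  finally show ?thesis .
qed

definition tl :: "real \<Rightarrow> real \<Rightarrow> ereal" where
  "tl t d = (if d = 0 then \<infinity> else ereal (t / d))"

definition wt :: "real \<Rightarrow> ereal \<Rightarrow> ennreal" where
  "wt a u = (case u of ereal t \<Rightarrow> ennreal (t powr (- a)) | _ \<Rightarrow> 0)"

definition psi :: "ereal \<Rightarrow> ereal \<Rightarrow> (nat \<Rightarrow> ereal) \<Rightarrow> ennreal" where
  "psi \<alpha> u v = (if \<alpha> = \<infinity> then (if \<forall>i. u < v i then 1 else 0)
     else wt (real_of_ereal \<alpha>) u / (wt (real_of_ereal \<alpha>) u + (\<Sum>i. wt (real_of_ereal \<alpha>) (v i))))"

abbreviation ES :: "(nat \<Rightarrow> ereal) measure" where "ES \<equiv> PiM UNIV (\<lambda>_::nat. (borel :: ereal measure))"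

lemma wt_alt: "wt a u = (if u = \<infinity> \<or> u = -\<infinity> then 0 else ennreal (real_of_ereal u powr (- a)))"
  by (cases u) (auto simp: wt_def)

lemma meas_wt[measurable]: "wt a \<in> borel_measurable borel"
  unfolding wt_alt[abs_def] by measurable

lemma meas_tl[measurable]: "(\<lambda>w. tl (fst w) (snd w)) \<in> borel_measurable (borel \<Otimes>\<^sub>M borel)"
  unfolding tl_def by measurable

lemma meas_tl'[measurable (raw)]:
  "f \<in> borel_measurable N \<Longrightarrow> g \<in> borel_measurable N \<Longrightarrow> (\<lambda>x. tl (f x) (g x)) \<in> borel_measurable N"
  using measurable_compose[OF measurable_Pair meas_tl, of f N g] by simp

lemma meas_psi: "(\<lambda>w. psi \<alpha> (fst w) (snd w)) \<in> borel_measurable (borel \<Otimes>\<^sub>M ES)"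
  unfolding psi_def by measurable

lemma psi_inf[simp]: "psi \<alpha> \<infinity> v = 0"
  by (simp add: psi_def wt_def)

lemma ppr_T_pts: "ppr_T e = pts 0 e"
  by (simp add: ppr_T_def pts_def fun_eq_iff)

lemma Ttilde_tl: "ppr_Ttilde Q P \<omega> i = tl (pts 0 (snd \<omega>) i) (ppr_dens Q P (fst \<omega> i))"
  by (simp add: ppr_Ttilde_def tl_def ppr_T_pts)

lemma weight_wt: "ppr_weight a Q P \<omega> i = wt a (ppr_Ttilde Q P \<omega> i)"
  by (simp add: ppr_weight_def wt_def)

lemma finite_sum_dl:
  fixes w :: "nat \<Rightarrow> ennreal"
  assumes "k \<le> n"
  shows "(\<Sum>i<Suc n. w i) = w k + (\<Sum>i<n. dl k w i)"
proof -
  let ?g = "\<lambda>i::nat. if i < k then i else Suc i"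
  have inj: "inj_on ?g {..<n}" by (auto simp: inj_on_def split: if_splits)
  have img: "{..<Suc n} = insert k (?g ` {..<n})"
  proof (intro equalityI subsetI)
    fix i assume i: "i \<in> {..<Suc n}"
    show "i \<in> insert k (?g ` {..<n})"
    proof (cases "i < k")
      case True
      then have "i \<in> {..<n}" using assms by auto
      then show ?thesis using True by (intro insertI2 rev_image_eqI[of i]) auto
    next
      case False
      show ?thesis
      proof (cases "i = k")
        case False
        with \<open>\<not> i < k\<close> have "i = ?g (i - 1)" "i - 1 \<in> {..<n}" using i by auto
        then show ?thesis by (intro insertI2 rev_image_eqI[of "i - 1"]) simp_all
      qed simp
    qed
  next
    fix i assume "i \<in> insert k (?g ` {..<n})"
    then show "i \<in> {..<Suc n}" using assms by auto
  qed
  have nk: "k \<notin> ?g ` {..<n}" by auto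
  have "(\<Sum>i<Suc n. w i) = sum w (insert k (?g ` {..<n}))" by (simp only: img)
  also have "\<dots> = w k + sum w (?g ` {..<n})" by (rule sum.insert) (use nk in auto)
  also have "sum w (?g ` {..<n}) = sum (w \<circ> ?g) {..<n}" by (rule sum.reindex[OF inj])
  also have "\<dots> = (\<Sum>i<n. dl k w i)" by (simp add: dl_def comp_def)
  finally show ?thesis .
qed

lemma suminf_dl:
  fixes w :: "nat \<Rightarrow> ennreal"
  shows "(\<Sum>i. w i) = w k + (\<Sum>i. dl k w i)"
proof -
  have L1: "(\<lambda>n. \<Sum>i<Suc n. w i) \<longlonglongrightarrow> (\<Sum>i. w i)"
    by (rule LIMSEQ_Suc, rule summable_LIMSEQ) simp
  have L2: "(\<lambda>n. w k + (\<Sum>i<n. dl k w i)) \<longlonglongrightarrow> w k + (\<Sum>i. dl k w i)"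
    by (intro tendsto_add tendsto_const summable_LIMSEQ) simp
  have ev: "\<forall>\<^sub>F n in sequentially. w k + (\<Sum>i<n. dl k w i) = (\<Sum>i<Suc n. w i)"
    unfolding eventually_sequentially by (intro exI[of _ k] allI impI finite_sum_dl[symmetric])
  have "(\<lambda>n. \<Sum>i<Suc n. w i) \<longlonglongrightarrow> w k + (\<Sum>i. dl k w i)"
    by (rule Lim_transform_eventually[OF L2 ev])
  then show ?thesis using L1 LIMSEQ_unique by auto
qed

lemma all_dl: "(\<forall>j. j \<noteq> k \<longrightarrow> X k < X j) \<longleftrightarrow> (\<forall>i. X k < dl k X i)"
proof
  assume "\<forall>j. j \<noteq> k \<longrightarrow> X k < X j" then show "\<forall>i. X k < dl k X i" by (auto simp: dl_def)
next
  assume a: "\<forall>i. X k < dl k X i"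
  show "\<forall>j. j \<noteq> k \<longrightarrow> X k < X j"
  proof (intro allI impI)
    fix j assume "j \<noteq> k"
    then show "X k < X j"
    proof (cases "j < k")
      case True then show ?thesis using a[rule_format, of j] by (simp add: dl_def)
    next
      case False
      with \<open>j \<noteq> k\<close> have "j = Suc (j - 1)" "\<not> j - 1 < k" by auto
      then show ?thesis using a[rule_format, of "j - 1"] by (simp add: dl_def)
    qed
  qed
qed

lemma index_psi: "ppr_index_prob \<alpha> Q P \<omega> k = psi \<alpha> (ppr_Ttilde Q P \<omega> k) (dl k (ppr_Ttilde Q P \<omega>))"
proof -
  have "(\<Sum>i. wt a (ppr_Ttilde Q P \<omega> i)) = wt a (ppr_Ttilde Q P \<omega> k) + (\<Sum>i. wt a (dl k (ppr_Ttilde Q P \<omega>) i))" for a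
    using suminf_dl[of "\<lambda>i. wt a (ppr_Ttilde Q P \<omega> i)" k] by (simp add: dl_def)
  then show ?thesis
    unfolding ppr_index_prob_def psi_def weight_wt using all_dl[of k "ppr_Ttilde Q P \<omega>"] by simp
qed

lemma dl_eta: "dl k f = (\<lambda>i. f (if i < k then i else Suc i))"
  by (simp add: dl_def fun_eq_iff)

lemma Ttilde_eta: "(\<lambda>i. tl (pts 0 (snd \<omega>) i) (ppr_dens Q P (fst \<omega> i))) = ppr_Ttilde Q P \<omega>"
  by (simp add: Ttilde_tl fun_eq_iff)

lemma scale:
  fixes F :: "ereal \<Rightarrow> ennreal"
  assumes F[measurable]: "F \<in> borel_measurable borel" and Finf: "F \<infinity> = 0" and d: "0 \<le> d"
  shows "(\<integral>\<^sup>+t. indicator {0<..} t * F (tl t d) \<partial>lborel) = ennreal d * (\<integral>\<^sup>+s. indicator {0<..} s * F (ereal s) \<partial>lborel)"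
proof (cases "d = 0")
  case True
  then show ?thesis by (simp add: tl_def Finf)
next
  case False
  with d have d: "0 < d" by simp
  have "(\<integral>\<^sup>+t. indicator {0<..} t * F (tl t d) \<partial>lborel) = (\<integral>\<^sup>+t. indicator {0<..} t * F (ereal (t / d)) \<partial>lborel)"
    using d by (simp add: tl_def)
  also have "\<dots> = ennreal \<bar>d\<bar> * (\<integral>\<^sup>+s. indicator {0<..} (0 + d * s) * F (ereal ((0 + d * s) / d)) \<partial>lborel)"
    by (rule nn_integral_real_affine) (use d in auto)
  also have "\<dots> = ennreal d * (\<integral>\<^sup>+s. indicator {0<..} s * F (ereal s) \<partial>lborel)"
    using d by (intro arg_cong2[where f="(*)"] nn_integral_cong) (auto simp: indicator_def zero_less_mult_iff)
  finally show ?thesis .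
qed

lemma meas_dens[measurable]: "ppr_dens Q P \<in> borel_measurable Q"
  unfolding ppr_dens_def by measurable

lemma meas_Tt_gen:
  assumes s: "s \<in> measurable N RS" and zs: "zs \<in> measurable N (PiM UNIV (\<lambda>_::nat. Q))"
  shows "(\<lambda>x i. tl (s x i) (ppr_dens Q P (zs x i))) \<in> measurable N ES"
proof (rule measurable_PiM_single')
  fix i
  have [measurable]: "(\<lambda>x. s x i) \<in> borel_measurable N"
    using measurable_compose[OF s measurable_component_singleton[of i UNIV "\<lambda>_. borel"]] by simp
  have [measurable]: "(\<lambda>x. zs x i) \<in> measurable N Q"
    using measurable_compose[OF zs measurable_component_singleton[of i UNIV "\<lambda>_. Q"]] by simp
  show "(\<lambda>x. tl (s x i) (ppr_dens Q P (zs x i))) \<in> measurable N borel" by measurable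
qed auto

lemma meas_Tt[measurable]: "(\<lambda>\<omega>. ppr_Ttilde Q P \<omega>) \<in> measurable (PiM UNIV (\<lambda>_::nat. Q) \<Otimes>\<^sub>M EE) ES"
proof -
  have "(\<lambda>x i. tl (pts 0 (snd x) i) (ppr_dens Q P (fst x i))) \<in> measurable (PiM UNIV (\<lambda>_::nat. Q) \<Otimes>\<^sub>M EE) ES"
    by (rule meas_Tt_gen) measurable
  moreover have "(\<lambda>x i. tl (pts 0 (snd x) i) (ppr_dens Q P (fst x i))) = (\<lambda>\<omega>. ppr_Ttilde Q P \<omega>)"
    by (simp add: fun_eq_iff Ttilde_tl)
  ultimately show ?thesis by simp
qed

lemma ppr_space_eq: "ppr_space Q = PiM UNIV (\<lambda>_::nat. Q) \<Otimes>\<^sub>M EE"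
  by (simp add: ppr_space_def)

lemma dens_int:
  assumes Q: "prob_space Q" and P: "prob_space P" "sets P = sets Q" and ac: "absolutely_continuous Q P"
    and A: "A \<in> sets Q"
  shows "(\<integral>\<^sup>+z. ennreal (ppr_dens Q P z) * indicator A z \<partial>Q) = emeasure P A"
proof -
  interpret Q: prob_space Q by fact
  have sfP: "sigma_finite_measure P" using P(1) by (rule prob_space_imp_sigma_finite)
  have "emeasure P A = emeasure (density Q (RN_deriv Q P)) A"
    using Q.density_RN_deriv[OF ac P(2)] by simp
  also have "\<dots> = (\<integral>\<^sup>+z. RN_deriv Q P z * indicator A z \<partial>Q)"
    using A by (simp add: emeasure_density)
  also have "\<dots> = (\<integral>\<^sup>+z. ennreal (ppr_dens Q P z) * indicator A z \<partial>Q)"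
    using Q.RN_deriv_finite[OF sfP ac P(2)]
    by (intro nn_integral_cong_AE) (auto simp: ppr_dens_def ennreal_enn2real_if)
  finally show ?thesis ..
qed


lemma master:
  assumes Q: "prob_space Q" and P: "prob_space P" "sets P = sets Q" and ac: "absolutely_continuous Q P"
    and Psi[measurable]: "(\<lambda>w. Psi (fst w) (snd w)) \<in> borel_measurable (borel \<Otimes>\<^sub>M ES)"
    and Psi_inf: "\<And>v. Psi \<infinity> v = 0"
    and A[measurable]: "A \<in> sets Q"
  shows "(\<Sum>k. \<integral>\<^sup>+\<omega>. indicator A (fst \<omega> k) * Psi (ppr_Ttilde Q P \<omega> k) (dl k (ppr_Ttilde Q P \<omega>)) \<partial>ppr_space Q)
       = (\<integral>\<^sup>+s. indicator {0<..} s * \<integral>\<^sup>+\<omega>. Psi (ereal s) (ppr_Ttilde Q P \<omega>) \<partial>ppr_space Q \<partial>lborel) * emeasure P A"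
proof -
  let ?PE = "PiM UNIV (\<lambda>_::nat. Q) \<Otimes>\<^sub>M EE"
  have sfQ: "sigma_finite_measure Q" by (rule prob_space_imp_sigma_finite[OF Q])
  have sfPE: "sigma_finite_measure ?PE"
    by (rule prob_space_imp_sigma_finite, rule prob_space_pair[OF prob_PiM[OF Q] prob_PiM[OF prob_EXP]])
  note [measurable (raw)] = sigma_finite_measure.borel_measurable_nn_integral[OF sfQ]
    sigma_finite_measure.borel_measurable_nn_integral[OF sfPE]
  have Psi'[measurable (raw)]: "(\<lambda>x. Psi (a x) (b x)) \<in> borel_measurable N"
    if "a \<in> borel_measurable N" "b \<in> measurable N ES" for a b and N :: "'b measure"
    using measurable_compose[OF measurable_Pair[OF that] Psi] by simp
  define f where "f = ppr_dens Q P"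
  have f[measurable]: "f \<in> borel_measurable Q" unfolding f_def by measurable
  define g where "g w = (case w of (t, z, s, zs) \<Rightarrow> indicator A z * Psi (tl t (f z)) (\<lambda>i. tl (s i) (f (zs i))))" for w
  have Tg: "(\<lambda>w. \<lambda>i. tl (fst (snd (snd w)) i) (ppr_dens Q P (snd (snd (snd w)) i))) \<in> measurable (borel \<Otimes>\<^sub>M (Q \<Otimes>\<^sub>M (RS \<Otimes>\<^sub>M PiM UNIV (\<lambda>_::nat. Q)))) ES"
    by (rule meas_Tt_gen) measurable
  have g[measurable]: "g \<in> borel_measurable (borel \<Otimes>\<^sub>M (Q \<Otimes>\<^sub>M (RS \<Otimes>\<^sub>M PiM UNIV (\<lambda>_::nat. Q))))"
  proof -
    have "g = (\<lambda>w. indicator A (fst (snd w)) * Psi (tl (fst w) (f (fst (snd w)))) (\<lambda>i. tl (fst (snd (snd w)) i) (ppr_dens Q P (snd (snd (snd w)) i))))"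
      by (auto simp: g_def f_def fun_eq_iff split: prod.split)
    also have "\<dots> \<in> borel_measurable (borel \<Otimes>\<^sub>M (Q \<Otimes>\<^sub>M (RS \<Otimes>\<^sub>M PiM UNIV (\<lambda>_::nat. Q))))"
      using Tg by measurable
    finally show ?thesis .
  qed
  define Xi where "Xi u = (\<integral>\<^sup>+\<omega>. Psi u (ppr_Ttilde Q P \<omega>) \<partial>?PE)" for u
  have Xi[measurable]: "Xi \<in> borel_measurable borel" unfolding Xi_def by measurable
  have Xi_inf: "Xi \<infinity> = 0" by (simp add: Xi_def Psi_inf)
  have "(\<Sum>k. \<integral>\<^sup>+\<omega>. indicator A (fst \<omega> k) * Psi (ppr_Ttilde Q P \<omega> k) (dl k (ppr_Ttilde Q P \<omega>)) \<partial>ppr_space Q)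
     = (\<Sum>k. \<integral>\<^sup>+\<omega>. g (pts 0 (snd \<omega>) k, fst \<omega> k, dl k (pts 0 (snd \<omega>)), dl k (fst \<omega>)) \<partial>?PE)"
    unfolding ppr_space_eq g_def
    by (intro suminf_cong nn_integral_cong) (simp add: Ttilde_tl dl_eta f_def)
  also have "\<dots> = (\<integral>\<^sup>+t. indicator {0<..} t * \<integral>\<^sup>+z. \<integral>\<^sup>+\<omega>. g (t, z, pts 0 (snd \<omega>), fst \<omega>) \<partial>?PE \<partial>Q \<partial>lborel)"
    by (rule pipe[OF Q g])
  also have "\<dots> = (\<integral>\<^sup>+t. \<integral>\<^sup>+z. indicator {0<..} t * (indicator A z * Xi (tl t (f z))) \<partial>Q \<partial>lborel)"
  proof (intro nn_integral_cong)
    fix t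
    have "(\<integral>\<^sup>+z. \<integral>\<^sup>+\<omega>. g (t, z, pts 0 (snd \<omega>), fst \<omega>) \<partial>?PE \<partial>Q) = (\<integral>\<^sup>+z. indicator A z * Xi (tl t (f z)) \<partial>Q)"
    proof (intro nn_integral_cong)
      fix z
      have "(\<integral>\<^sup>+\<omega>. g (t, z, pts 0 (snd \<omega>), fst \<omega>) \<partial>?PE) = (\<integral>\<^sup>+\<omega>. indicator A z * Psi (tl t (f z)) (ppr_Ttilde Q P \<omega>) \<partial>?PE)"
        by (simp add: g_def f_def Ttilde_eta)
      also have "\<dots> = indicator A z * Xi (tl t (f z))"
        unfolding Xi_def by (rule nn_integral_cmult) measurable
      finally show "(\<integral>\<^sup>+\<omega>. g (t, z, pts 0 (snd \<omega>), fst \<omega>) \<partial>?PE) = indicator A z * Xi (tl t (f z))" .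
    qed
    then show "indicator {0<..} t * (\<integral>\<^sup>+z. \<integral>\<^sup>+\<omega>. g (t, z, pts 0 (snd \<omega>), fst \<omega>) \<partial>?PE \<partial>Q)
      = (\<integral>\<^sup>+z. indicator {0<..} t * (indicator A z * Xi (tl t (f z))) \<partial>Q)"
      by (simp add: nn_integral_cmult)
  qed
  also have "\<dots> = (\<integral>\<^sup>+z. \<integral>\<^sup>+t. indicator {0<..} t * (indicator A z * Xi (tl t (f z))) \<partial>lborel \<partial>Q)"
    by (rule nn_swap[OF lborel.sigma_finite_measure_axioms sfQ]) measurable
  also have "\<dots> = (\<integral>\<^sup>+z. indicator A z * (\<integral>\<^sup>+t. indicator {0<..} t * Xi (tl t (f z)) \<partial>lborel) \<partial>Q)"
    by (intro nn_integral_cong) (simp add: nn_integral_cmult[symmetric] mult_ac)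
  also have "\<dots> = (\<integral>\<^sup>+z. indicator A z * (ennreal (f z) * (\<integral>\<^sup>+s. indicator {0<..} s * Xi (ereal s) \<partial>lborel)) \<partial>Q)"
    by (intro nn_integral_cong) (simp add: scale[OF Xi Xi_inf] f_def ppr_dens_def)
  also have "\<dots> = (\<integral>\<^sup>+z. ennreal (f z) * indicator A z \<partial>Q) * (\<integral>\<^sup>+s. indicator {0<..} s * Xi (ereal s) \<partial>lborel)"
    by (subst nn_integral_multc[symmetric]) (auto simp: mult_ac intro!: nn_integral_cong)
  also have "(\<integral>\<^sup>+z. ennreal (f z) * indicator A z \<partial>Q) = emeasure P A"
    unfolding f_def by (rule dens_int[OF Q P ac A])
  finally show ?thesis by (simp add: Xi_def ppr_space_eq mult_ac)
qed

lemma sum_single_ennreal: "(\<Sum>k. (if k = k0 then 1 else 0 :: ennreal)) = 1"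
  by (subst suminf_finite[of "{k0}"]) auto

lemma det_inf:
  fixes X :: "nat \<Rightarrow> ereal"
  assumes a: "\<exists>i. X i < \<infinity>"
    and b: "\<And>M::nat. finite {k. X k \<le> real M}"
    and c: "\<And>k i. X k = dl k X i \<Longrightarrow> X k = \<infinity>"
  shows "(\<Sum>k. psi \<infinity> (X k) (dl k X)) = 1"
proof -
  obtain i0 where i0: "X i0 < \<infinity>" using a by blast
  obtain M :: nat where M: "X i0 \<le> real M"
  proof (cases "X i0")
    case (real r)
    obtain M :: nat where "r \<le> real M" using real_arch_simple by blast
    then show ?thesis using that real by auto
  qed (use i0 that in auto)
  define S where "S = {k. X k \<le> real M}"
  have fS: "finite S" unfolding S_def by (rule b)
  have i0S: "i0 \<in> S" using M by (simp add: S_def)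
  obtain k0 where k0S: "k0 \<in> S" and k0min: "\<And>k. k \<in> S \<Longrightarrow> X k0 \<le> X k"
  proof -
    have "Min (X ` S) \<in> X ` S" using fS i0S by (intro Min_in) auto
    then obtain k0 where "k0 \<in> S" "X k0 = Min (X ` S)" by auto
    moreover have "\<And>k. k \<in> S \<Longrightarrow> Min (X ` S) \<le> X k" using fS by auto
    ultimately show ?thesis using that by metis
  qed
  have k0fin: "X k0 \<noteq> \<infinity>" using k0S by (auto simp: S_def)
  have strict: "X k0 < X j" if "j \<noteq> k0" for j
  proof -
    have ne: "X k0 \<noteq> X j"
    proof
      assume eq: "X k0 = X j"
      have "X k0 = dl k0 X (if j < k0 then j else j - 1)"
        using that eq by (auto simp: dl_def)
      then show False using c k0fin by blast
    qed
    show ?thesis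
    proof (cases "j \<in> S")
      case True then show ?thesis using k0min[OF True] ne by auto
    next
      case False
      then have "real M < X j" by (auto simp: S_def)
      moreover have "X k0 \<le> real M" using k0S by (auto simp: S_def)
      ultimately show ?thesis by auto
    qed
  qed
  have "psi \<infinity> (X k) (dl k X) = (if k = k0 then 1 else 0)" for k
  proof (cases "k = k0")
    case True
    then show ?thesis using strict all_dl[of k0 X] by (simp add: psi_def)
  next
    case False
    then have "\<not> X k < X k0" using strict[OF False] by auto
    then have "\<not> (\<forall>j. j \<noteq> k \<longrightarrow> X k < X j)" using False by auto
    then show ?thesis using False all_dl[of k X] by (simp add: psi_def)
  qed
  then show ?thesis using sum_single_ennreal[of k0] by simp
qed


lemma wt_less_top: "wt a u < top"
  by (cases u) (auto simp: wt_def)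

lemma det_fin:
  fixes X :: "nat \<Rightarrow> ereal"
  assumes al: "\<alpha> \<noteq> \<infinity>"
    and a: "\<exists>i. X i < \<infinity>"
    and d: "\<And>k. 0 < X k"
    and b: "finite {k. X k \<le> 1}"
    and e: "(\<Sum>k. if 1 < X k then wt (real_of_ereal \<alpha>) (X k) else 0) \<noteq> \<infinity>"
  shows "(\<Sum>k. psi \<alpha> (X k) (dl k X)) = 1"
proof -
  define a where "a = real_of_ereal \<alpha>"
  define W where "W k = wt a (X k)" for k
  define S where "S = (\<Sum>k. W k)"
  have psiW: "psi \<alpha> (X k) (dl k X) = W k / S" for k
  proof -
    have "S = W k + (\<Sum>i. dl k W i)" unfolding S_def by (rule suminf_dl)
    moreover have "dl k W i = wt a (dl k X i)" for i by (simp add: dl_def W_def)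
    ultimately show ?thesis using al by (simp add: psi_def a_def W_def)
  qed
  obtain i0 where i0: "X i0 < \<infinity>" using a by blast
  have "0 < W i0"
  proof (cases "X i0")
    case (real r)
    with d[of i0] have "0 < r" by simp
    then show ?thesis using real by (simp add: W_def wt_def)
  qed (use i0 d[of i0] in auto)
  moreover have "W i0 \<le> S"
    unfolding S_def using suminf_dl[of W i0] by (metis le_iff_add)
  ultimately have S0: "S \<noteq> 0" by auto
  have Sfin: "S < \<infinity>"
  proof -
    have "S = (\<Sum>k. (if 1 < X k then W k else 0) + (if 1 < X k then 0 else W k))"
      unfolding S_def by (intro suminf_cong) auto
    also have "\<dots> = (\<Sum>k. if 1 < X k then W k else 0) + (\<Sum>k. if 1 < X k then 0 else W k)"
      by (rule suminf_add[symmetric]) auto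
    finally have split: "S = (\<Sum>k. if 1 < X k then W k else 0) + (\<Sum>k. if 1 < X k then 0 else W k)" .
    have "(\<Sum>k. if 1 < X k then 0 else W k) = (\<Sum>k\<in>{k. X k \<le> 1}. if 1 < X k then 0 else W k)"
      by (rule suminf_finite[OF b]) auto
    also have "\<dots> < \<infinity>"
      using b by (simp add: W_def wt_less_top)
    finally have E2: "(\<Sum>k. if 1 < X k then 0 else W k) \<noteq> \<infinity>" by simp
    have E1: "(\<Sum>k. if 1 < X k then W k else 0) \<noteq> \<infinity>" using e unfolding W_def a_def by simp
    show ?thesis using split E1 E2 by (simp add: ennreal_add_eq_top less_top)
  qed
  have "(\<Sum>k. psi \<alpha> (X k) (dl k X)) = (\<Sum>k. W k * inverse S)"
    by (simp add: psiW divide_ennreal_def)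
  also have "\<dots> = S * inverse S" by (simp add: S_def)
  also have "\<dots> = 1" using S0 Sfin by (metis divide_ennreal_def ennreal_divide_self infinity_ennreal_def)
  finally show ?thesis .
qed

lemma sum_ind_infinite:
  assumes "infinite S"
  shows "(\<Sum>k. (if k \<in> S then 1 else 0 :: ennreal)) = \<infinity>"
proof -
  have "(\<Sum>k. (if k \<in> S then 1 else 0 :: ennreal)) = (\<integral>\<^sup>+k. indicator S k \<partial>count_space UNIV)"
    by (simp add: nn_integral_count_space_nat indicator_def of_bool_def)
  also have "\<dots> = emeasure (count_space UNIV) S" by simp
  also have "\<dots> = \<infinity>" using assms by simp
  finally show ?thesis .
qed

lemma prob_ppr: "prob_space Q \<Longrightarrow> prob_space (ppr_space Q)"
  unfolding ppr_space_eq by (rule prob_space_pair[OF prob_PiM prob_PiM[OF prob_EXP]])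

lemma F1:
  assumes Q: "prob_space Q" and P: "prob_space P" "sets P = sets Q" and ac: "absolutely_continuous Q P"
  shows "AE \<omega> in ppr_space Q. \<exists>i. ppr_dens Q P (fst \<omega> i) \<noteq> 0"
proof -
  interpret Q: prob_space Q by fact
  interpret PS: prob_space "PiM UNIV (\<lambda>_::nat. Q)" by (rule prob_PiM[OF Q])
  interpret E: prob_space EE by (rule prob_PiM[OF prob_EXP])
  define B where "B = {z \<in> space Q. ppr_dens Q P z = 0}"
  have B[measurable]: "B \<in> sets Q" unfolding B_def by measurable
  have q1: "measure Q B < 1"
  proof (rule ccontr)
    assume "\<not> measure Q B < 1"
    then have "measure Q B = 1" using Q.prob_le_1[of B] by linarith
    then have "AE z in Q. z \<in> B" using B by (simp add: Q.prob_eq_1)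
    then have "(\<integral>\<^sup>+z. ennreal (ppr_dens Q P z) * indicator (space Q) z \<partial>Q) = 0"
      by (subst nn_integral_0_iff_AE) (auto simp: B_def elim!: eventually_mono)
    moreover have "(\<integral>\<^sup>+z. ennreal (ppr_dens Q P z) * indicator (space Q) z \<partial>Q) = emeasure P (space Q)"
      by (rule dens_int[OF Q P ac]) simp
    moreover have "emeasure P (space Q) = 1"
      using prob_space.emeasure_space_1[OF P(1)] sets_eq_imp_space_eq[OF P(2)] by simp
    ultimately show False by simp
  qed
  have "(\<lambda>n. \<Prod>i\<le>n. measure Q B) \<longlonglongrightarrow> measure (PiM UNIV (\<lambda>_::nat. Q)) (Pi UNIV (\<lambda>_. B))"
    by (rule sequence_space.measure_PiM_countable[OF seq_space[OF Q]]) simp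
  moreover have "(\<lambda>n. \<Prod>i\<le>n. measure Q B) \<longlonglongrightarrow> 0"
  proof -
    have "(\<lambda>n. measure Q B ^ n) \<longlonglongrightarrow> 0" by (rule LIMSEQ_realpow_zero) (use q1 in auto)
    then have "(\<lambda>n. measure Q B ^ Suc n) \<longlonglongrightarrow> 0" by (rule LIMSEQ_Suc)
    then show ?thesis by simp
  qed
  ultimately have m0: "measure (PiM UNIV (\<lambda>_::nat. Q)) (Pi UNIV (\<lambda>_. B)) = 0" using LIMSEQ_unique by blast
  have PiB: "Pi UNIV (\<lambda>_. B) \<in> sets (PiM UNIV (\<lambda>_::nat. Q))" by (rule sequence_space.infprod_in_sets[OF seq_space[OF Q]]) simp
  have "emeasure (PiM UNIV (\<lambda>_::nat. Q) \<Otimes>\<^sub>M EE) (Pi UNIV (\<lambda>_. B) \<times> space EE)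
      = emeasure (PiM UNIV (\<lambda>_::nat. Q)) (Pi UNIV (\<lambda>_. B)) * emeasure EE (space EE)"
    by (rule E.emeasure_pair_measure_Times[OF PiB]) simp
  also have "\<dots> = 0" using m0 PiB by (simp add: PS.emeasure_eq_measure)
  finally have "Pi UNIV (\<lambda>_. B) \<times> space EE \<in> null_sets (ppr_space Q)"
    unfolding ppr_space_eq using PiB by (auto simp: null_sets_def)
  then show ?thesis
    by (rule AE_I') (auto simp: ppr_space_eq space_pair_measure space_PiM B_def PiE_iff)
qed


lemma meas_Tt_ppr[measurable]: "(\<lambda>\<omega>. ppr_Ttilde Q P \<omega>) \<in> measurable (ppr_space Q) ES"
  unfolding ppr_space_eq by (rule meas_Tt)

lemma meas_Tt_comp[measurable]: "(\<lambda>\<omega>. ppr_Ttilde Q P \<omega> k) \<in> borel_measurable (ppr_space Q)"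
  using measurable_compose[OF meas_Tt_ppr measurable_component_singleton[of k UNIV "\<lambda>_. borel"]] by simp

lemma master_space:
  assumes Q: "prob_space Q" and P: "prob_space P" "sets P = sets Q" and ac: "absolutely_continuous Q P"
    and Psi[measurable]: "(\<lambda>w. Psi (fst w) (snd w)) \<in> borel_measurable (borel \<Otimes>\<^sub>M ES)"
    and Psi_inf: "\<And>v. Psi \<infinity> v = 0"
  shows "(\<integral>\<^sup>+\<omega>. (\<Sum>k. Psi (ppr_Ttilde Q P \<omega> k) (dl k (ppr_Ttilde Q P \<omega>))) \<partial>ppr_space Q)
       = (\<integral>\<^sup>+s. indicator {0<..} s * \<integral>\<^sup>+\<omega>. Psi (ereal s) (ppr_Ttilde Q P \<omega>) \<partial>ppr_space Q \<partial>lborel)"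
proof -
  have Psi'[measurable (raw)]: "(\<lambda>x. Psi (a x) (b x)) \<in> borel_measurable N"
    if "a \<in> borel_measurable N" "b \<in> measurable N ES" for a b and N :: "'b measure"
    using measurable_compose[OF measurable_Pair[OF that] Psi] by simp
  have "(\<integral>\<^sup>+\<omega>. (\<Sum>k. Psi (ppr_Ttilde Q P \<omega> k) (dl k (ppr_Ttilde Q P \<omega>))) \<partial>ppr_space Q)
      = (\<Sum>k. \<integral>\<^sup>+\<omega>. Psi (ppr_Ttilde Q P \<omega> k) (dl k (ppr_Ttilde Q P \<omega>)) \<partial>ppr_space Q)"
    by (rule nn_integral_suminf) measurable
  also have "\<dots> = (\<Sum>k. \<integral>\<^sup>+\<omega>. indicator (space Q) (fst \<omega> k) * Psi (ppr_Ttilde Q P \<omega> k) (dl k (ppr_Ttilde Q P \<omega>)) \<partial>ppr_space Q)"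
    by (intro suminf_cong nn_integral_cong) (auto simp: ppr_space_eq space_pair_measure space_PiM PiE_iff)
  also have "\<dots> = (\<integral>\<^sup>+s. indicator {0<..} s * \<integral>\<^sup>+\<omega>. Psi (ereal s) (ppr_Ttilde Q P \<omega>) \<partial>ppr_space Q \<partial>lborel) * emeasure P (space Q)"
    by (rule master[OF Q P ac Psi Psi_inf]) simp
  also have "emeasure P (space Q) = 1"
    using prob_space.emeasure_space_1[OF P(1)] sets_eq_imp_space_eq[OF P(2)] by simp
  finally show ?thesis by simp
qed

lemma AE_from_zero:
  assumes X[measurable]: "\<And>k. X k \<in> borel_measurable M"
    and "(\<integral>\<^sup>+\<omega>. (\<Sum>k. X k \<omega>) \<partial>M) = 0"
  shows "AE \<omega> in M. \<forall>k. X k \<omega> = 0"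
proof -
  have "AE \<omega> in M. (\<Sum>k. X k \<omega>) = 0"
    using assms(2) by (subst (asm) nn_integral_0_iff_AE) measurable
  then show ?thesis by eventually_elim (simp add: suminf_eq_zero_iff)
qed

lemma AE_from_fin:
  assumes X[measurable]: "\<And>k. X k \<in> borel_measurable M"
    and "(\<integral>\<^sup>+\<omega>. (\<Sum>k. X k \<omega>) \<partial>M) \<noteq> \<infinity>"
  shows "AE \<omega> in M. (\<Sum>k. X k \<omega>) \<noteq> \<infinity>"
  by (rule nn_integral_PInf_AE) (use assms in measurable)


lemma int_const_ppr: assumes Q: "prob_space Q" shows "(\<integral>\<^sup>+\<omega>. c \<partial>ppr_space Q) = c"
  using prob_space.emeasure_space_1[OF prob_ppr[OF Q]] by simp

lemma AE_pos:
  assumes Q: "prob_space Q" and P: "prob_space P" "sets P = sets Q" and ac: "absolutely_continuous Q P"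
  shows "AE \<omega> in ppr_space Q. \<forall>k. 0 < ppr_Ttilde Q P \<omega> k"
proof -
  define Psi where "Psi (u::ereal) (v::nat \<Rightarrow> ereal) = (if u \<le> 0 then 1 else (0::ennreal))" for u v
  have m: "(\<lambda>w. Psi (fst w) (snd w)) \<in> borel_measurable (borel \<Otimes>\<^sub>M ES)" unfolding Psi_def by measurable
  have "(\<integral>\<^sup>+\<omega>. (\<Sum>k. Psi (ppr_Ttilde Q P \<omega> k) (dl k (ppr_Ttilde Q P \<omega>))) \<partial>ppr_space Q)
       = (\<integral>\<^sup>+s. indicator {0<..} s * \<integral>\<^sup>+\<omega>. Psi (ereal s) (ppr_Ttilde Q P \<omega>) \<partial>ppr_space Q \<partial>lborel)"
    by (rule master_space[OF Q P ac m]) (simp add: Psi_def)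
  also have "\<dots> = 0"
  proof -
    have "indicator {0<..} s * (\<integral>\<^sup>+\<omega>. Psi (ereal s) (ppr_Ttilde Q P \<omega>) \<partial>ppr_space Q) = 0" for s :: real
      by (auto simp: indicator_def Psi_def)
    then have "(\<lambda>s. indicator {0<..} s * (\<integral>\<^sup>+\<omega>. Psi (ereal s) (ppr_Ttilde Q P \<omega>) \<partial>ppr_space Q)) = (\<lambda>s. 0)"
      by (intro ext)
    then show ?thesis by (simp only:) simp
  qed
  finally have "AE \<omega> in ppr_space Q. \<forall>k. Psi (ppr_Ttilde Q P \<omega> k) (dl k (ppr_Ttilde Q P \<omega>)) = 0"
    by (intro AE_from_zero) (auto simp: Psi_def)
  then show ?thesis by eventually_elim (auto simp: Psi_def not_le split: if_splits)
qed

lemma AE_fin: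
  assumes Q: "prob_space Q" and P: "prob_space P" "sets P = sets Q" and ac: "absolutely_continuous Q P"
  shows "AE \<omega> in ppr_space Q. \<forall>M::nat. finite {k. ppr_Ttilde Q P \<omega> k \<le> real M}"
proof (subst AE_all_countable, intro allI)
  fix M :: nat
  define Psi where "Psi (u::ereal) (v::nat \<Rightarrow> ereal) = (if u \<le> ereal (real M) then 1 else (0::ennreal))" for u v
  have m: "(\<lambda>w. Psi (fst w) (snd w)) \<in> borel_measurable (borel \<Otimes>\<^sub>M ES)" unfolding Psi_def by measurable
  have "(\<integral>\<^sup>+\<omega>. (\<Sum>k. Psi (ppr_Ttilde Q P \<omega> k) (dl k (ppr_Ttilde Q P \<omega>))) \<partial>ppr_space Q)
       = (\<integral>\<^sup>+s. indicator {0<..} s * \<integral>\<^sup>+\<omega>. Psi (ereal s) (ppr_Ttilde Q P \<omega>) \<partial>ppr_space Q \<partial>lborel)"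
    by (rule master_space[OF Q P ac m]) (simp add: Psi_def)
  also have "\<dots> = (\<integral>\<^sup>+s. indicator {0<..real M} s \<partial>lborel)"
    by (intro nn_integral_cong) (auto simp: indicator_def Psi_def prob_space.emeasure_space_1[OF prob_ppr[OF Q]])
  also have "\<dots> = ennreal (real M)" by simp
  finally have "AE \<omega> in ppr_space Q. (\<Sum>k. Psi (ppr_Ttilde Q P \<omega> k) (dl k (ppr_Ttilde Q P \<omega>))) \<noteq> \<infinity>"
    by (intro AE_from_fin) (auto simp: Psi_def)
  then show "AE \<omega> in ppr_space Q. finite {k. ppr_Ttilde Q P \<omega> k \<le> real M}"
  proof eventually_elim
    case (elim \<omega>)
    show ?case
    proof (rule ccontr)
      assume "infinite {k. ppr_Ttilde Q P \<omega> k \<le> real M}"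
      from sum_ind_infinite[OF this] elim show False by (simp add: Psi_def)
    qed
  qed
qed


lemma pt0: "(\<integral>\<^sup>+s. (if ereal s = x then 1 else 0) \<partial>lborel) = 0"
proof -
  have "(\<integral>\<^sup>+s. (if ereal s = x then 1 else 0) \<partial>lborel) \<le> (\<integral>\<^sup>+s. indicator {real_of_ereal x} s \<partial>lborel)"
    by (intro nn_integral_mono) (auto simp: indicator_def)
  also have "\<dots> = 0" by simp
  finally show ?thesis by simp
qed

lemma meas_snd_comp[measurable]: "(\<lambda>w. snd w i) \<in> borel_measurable (borel \<Otimes>\<^sub>M ES)"
  using measurable_compose[OF measurable_snd measurable_component_singleton[of i UNIV "\<lambda>_. borel"]] by simp

lemma AE_noties:
  assumes Q: "prob_space Q" and P: "prob_space P" "sets P = sets Q" and ac: "absolutely_continuous Q P"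
  shows "AE \<omega> in ppr_space Q. \<forall>k i. ppr_Ttilde Q P \<omega> k = dl k (ppr_Ttilde Q P \<omega>) i \<longrightarrow> ppr_Ttilde Q P \<omega> k = \<infinity>"
proof -
  define Psi where "Psi (u::ereal) (v::nat \<Rightarrow> ereal) = (\<Sum>i. if u = v i \<and> u \<noteq> \<infinity> then 1 else (0::ennreal))" for u v
  have Psi_alt: "Psi u v = (\<Sum>i. if u \<le> v i \<and> v i \<le> u \<and> u < \<infinity> then 1 else (0::ennreal))" for u v
    unfolding Psi_def by (intro suminf_cong) (auto simp: less_top)
  have m: "(\<lambda>w. Psi (fst w) (snd w)) \<in> borel_measurable (borel \<Otimes>\<^sub>M ES)" unfolding Psi_alt by measurable
  have sfPR: "sigma_finite_measure (ppr_space Q)" by (rule prob_space_imp_sigma_finite[OF prob_ppr[OF Q]])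
  have "(\<integral>\<^sup>+\<omega>. (\<Sum>k. Psi (ppr_Ttilde Q P \<omega> k) (dl k (ppr_Ttilde Q P \<omega>))) \<partial>ppr_space Q)
       = (\<integral>\<^sup>+s. indicator {0<..} s * \<integral>\<^sup>+\<omega>. Psi (ereal s) (ppr_Ttilde Q P \<omega>) \<partial>ppr_space Q \<partial>lborel)"
    by (rule master_space[OF Q P ac m]) (simp add: Psi_def)
  also have "\<dots> \<le> (\<integral>\<^sup>+s. \<integral>\<^sup>+\<omega>. (\<Sum>i. if ereal s = ppr_Ttilde Q P \<omega> i then 1 else (0::ennreal)) \<partial>ppr_space Q \<partial>lborel)"
  proof (intro nn_integral_mono)
    fix s :: real
    have "(\<integral>\<^sup>+\<omega>. Psi (ereal s) (ppr_Ttilde Q P \<omega>) \<partial>ppr_space Q) \<le> (\<integral>\<^sup>+\<omega>. (\<Sum>i. if ereal s = ppr_Ttilde Q P \<omega> i then 1 else (0::ennreal)) \<partial>ppr_space Q)"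
      unfolding Psi_def by (intro nn_integral_mono suminf_le) auto
    moreover have "indicator {0<..} s \<le> (1::ennreal)" by (simp add: indicator_def)
    ultimately show "indicator {0<..} s * (\<integral>\<^sup>+\<omega>. Psi (ereal s) (ppr_Ttilde Q P \<omega>) \<partial>ppr_space Q) \<le> (\<integral>\<^sup>+\<omega>. (\<Sum>i. if ereal s = ppr_Ttilde Q P \<omega> i then 1 else (0::ennreal)) \<partial>ppr_space Q)"
      by (metis mult_1 mult_mono zero_le)
  qed
  also have "\<dots> = (\<integral>\<^sup>+\<omega>. \<integral>\<^sup>+s. (\<Sum>i. if ereal s = ppr_Ttilde Q P \<omega> i then 1 else (0::ennreal)) \<partial>lborel \<partial>ppr_space Q)"
    by (rule nn_swap[OF lborel.sigma_finite_measure_axioms sfPR]) measurable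
  also have "\<dots> = (\<integral>\<^sup>+\<omega>. (\<Sum>i. \<integral>\<^sup>+s. (if ereal s = ppr_Ttilde Q P \<omega> i then 1 else (0::ennreal)) \<partial>lborel) \<partial>ppr_space Q)"
    by (intro nn_integral_cong nn_integral_suminf) measurable
  also have "\<dots> = 0" by (simp add: pt0)
  finally have "AE \<omega> in ppr_space Q. \<forall>k. Psi (ppr_Ttilde Q P \<omega> k) (dl k (ppr_Ttilde Q P \<omega>)) = 0"
    by (intro AE_from_zero) (auto simp: Psi_def intro: measurable_compose[OF meas_Tt_ppr meas_dl])
  then show ?thesis
  proof eventually_elim
    case (elim \<omega>)
    show ?case
    proof (intro allI impI)
      fix k i assume eq: "ppr_Ttilde Q P \<omega> k = dl k (ppr_Ttilde Q P \<omega>) i"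
      show "ppr_Ttilde Q P \<omega> k = \<infinity>"
      proof (rule ccontr)
        assume ne: "ppr_Ttilde Q P \<omega> k \<noteq> \<infinity>"
        have "0 = Psi (ppr_Ttilde Q P \<omega> k) (dl k (ppr_Ttilde Q P \<omega>))" using elim by simp
        also have "\<dots> = (\<Sum>j. if ppr_Ttilde Q P \<omega> k = dl k (ppr_Ttilde Q P \<omega>) j \<and> ppr_Ttilde Q P \<omega> k \<noteq> \<infinity> then 1 else (0::ennreal))"
          by (simp add: Psi_def)
        finally have "\<forall>j. (if ppr_Ttilde Q P \<omega> k = dl k (ppr_Ttilde Q P \<omega>) j \<and> ppr_Ttilde Q P \<omega> k \<noteq> \<infinity> then 1 else (0::ennreal)) = 0"
          by (simp add: suminf_eq_zero_iff)
        then show False using eq ne by (metis one_neq_zero)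
      qed
    qed
  qed
qed


lemma tail_int_fin:
  assumes a: "1 < a"
  shows "(\<integral>\<^sup>+s. ennreal (indicator {1..} s * s powr (- a)) \<partial>lborel) \<noteq> \<infinity>"
proof -
  have "((\<lambda>s. s powr (- a)) has_integral - (1 powr (- a + 1)) / (- a + 1)) {1..}"
    by (rule has_integral_powr_to_inf) (use a in auto)
  then have "(\<integral>\<^sup>+s. ennreal (indicator {1..} s * s powr (- a)) \<partial>lborel) = ennreal (- (1 powr (- a + 1)) / (- a + 1))"
    by (intro nn_integral_has_integral_lebesgue) auto
  then show ?thesis by simp
qed

lemma AE_tail:
  assumes Q: "prob_space Q" and P: "prob_space P" "sets P = sets Q" and ac: "absolutely_continuous Q P"
    and a: "1 < a"
  shows "AE \<omega> in ppr_space Q. (\<Sum>k. if 1 < ppr_Ttilde Q P \<omega> k then wt a (ppr_Ttilde Q P \<omega> k) else 0) \<noteq> \<infinity>"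
proof -
  define Psi where "Psi (u::ereal) (v::nat \<Rightarrow> ereal) = (if 1 < u then wt a u else 0)" for u v
  have m: "(\<lambda>w. Psi (fst w) (snd w)) \<in> borel_measurable (borel \<Otimes>\<^sub>M ES)" unfolding Psi_def by measurable
  have "(\<integral>\<^sup>+\<omega>. (\<Sum>k. Psi (ppr_Ttilde Q P \<omega> k) (dl k (ppr_Ttilde Q P \<omega>))) \<partial>ppr_space Q)
       = (\<integral>\<^sup>+s. indicator {0<..} s * \<integral>\<^sup>+\<omega>. Psi (ereal s) (ppr_Ttilde Q P \<omega>) \<partial>ppr_space Q \<partial>lborel)"
    by (rule master_space[OF Q P ac m]) (simp add: Psi_def wt_def)
  also have "\<dots> \<le> (\<integral>\<^sup>+s. ennreal (indicator {1..} s * s powr (- a)) \<partial>lborel)"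
    by (intro nn_integral_mono) (auto simp: Psi_def wt_def indicator_def prob_space.emeasure_space_1[OF prob_ppr[OF Q]])
  also have "\<dots> < \<infinity>" using tail_int_fin[OF a] by (simp add: less_top)
  finally have "AE \<omega> in ppr_space Q. (\<Sum>k. Psi (ppr_Ttilde Q P \<omega> k) (dl k (ppr_Ttilde Q P \<omega>))) \<noteq> \<infinity>"
    by (intro AE_from_fin) (auto simp: Psi_def less_top)
  then show ?thesis by (simp add: Psi_def)
qed


lemma meas_fst_comp[measurable]: "(\<lambda>\<omega>. fst \<omega> k) \<in> measurable (ppr_space Q) Q"
  unfolding ppr_space_eq
  using measurable_compose[OF measurable_fst measurable_component_singleton[of k UNIV "\<lambda>_. Q"]] by simp

lemma AE_sum_one:
  assumes Q: "prob_space Q" and P: "prob_space P" "sets P = sets Q" and ac: "absolutely_continuous Q P"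
    and al: "1 < \<alpha>"
  shows "AE \<omega> in ppr_space Q. (\<Sum>k. psi \<alpha> (ppr_Ttilde Q P \<omega> k) (dl k (ppr_Ttilde Q P \<omega>))) = 1"
proof -
  have tail: "AE \<omega> in ppr_space Q. \<alpha> \<noteq> \<infinity> \<longrightarrow> (\<Sum>k. if 1 < ppr_Ttilde Q P \<omega> k then wt (real_of_ereal \<alpha>) (ppr_Ttilde Q P \<omega> k) else 0) \<noteq> \<infinity>"
  proof (cases "\<alpha> = \<infinity>")
    case False
    then have "1 < real_of_ereal \<alpha>" using al by (cases \<alpha>) auto
    from AE_tail[OF Q P ac this] show ?thesis by (rule eventually_mono) simp
  qed simp
  show ?thesis
    using F1[OF Q P ac] AE_pos[OF Q P ac] AE_fin[OF Q P ac] AE_noties[OF Q P ac] tail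
  proof eventually_elim
    case (elim \<omega>)
    define X where "X = ppr_Ttilde Q P \<omega>"
    have a: "\<exists>i. X i < \<infinity>"
    proof -
      obtain i where "ppr_dens Q P (fst \<omega> i) \<noteq> 0" using elim(1) by blast
      then have "X i < \<infinity>" by (simp add: X_def ppr_Ttilde_def)
      then show ?thesis by blast
    qed
    show ?case
    proof (cases "\<alpha> = \<infinity>")
      case True
      have "(\<Sum>k. psi \<infinity> (X k) (dl k X)) = 1"
        by (rule det_inf[OF a]) (use elim(3,4) in \<open>auto simp: X_def\<close>)
      then show ?thesis using True by (simp add: X_def)
    next
      case False
      have b: "finite {k. X k \<le> 1}" using elim(3)[rule_format, of 1] by (simp add: X_def one_ereal_def)
      have "(\<Sum>k. psi \<alpha> (X k) (dl k X)) = 1"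
        by (rule det_fin[OF False a _ b]) (use elim(2,5) False in \<open>auto simp: X_def cong: if_cong\<close>)
      then show ?thesis by (simp add: X_def)
    qed
  qed
qed

theorem proposition1:
  fixes \<alpha> :: ereal and Q :: "'z measure" and MX :: "'x measure"
    and PZX :: "'x \<Rightarrow> 'z measure"
  assumes alpha: "1 < \<alpha>"
    and Q: "prob_space Q"
    and kernel: "PZX \<in> MX \<rightarrow>\<^sub>M prob_algebra Q"
    and ac: "\<And>x. x \<in> space MX \<Longrightarrow> absolutely_continuous Q (PZX x)"
    and x: "x \<in> space MX"
    and A: "A \<in> sets Q"
  shows "ppr_output_prob \<alpha> Q (PZX x) A = emeasure (PZX x) A"
proof -
  define P where "P = PZX x"
  have "P \<in> space (prob_algebra Q)" unfolding P_def using measurable_space[OF kernel x] .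
  then have P: "prob_space P" "sets P = sets Q" by (auto simp: space_prob_algebra)
  have acP: "absolutely_continuous Q P" unfolding P_def by (rule ac[OF x])
  have Psi[measurable]: "(\<lambda>w. psi \<alpha> (fst w) (snd w)) \<in> borel_measurable (borel \<Otimes>\<^sub>M ES)" by (rule meas_psi)
  have Psi'[measurable (raw)]: "(\<lambda>x. psi \<alpha> (a x) (b x)) \<in> borel_measurable N"
    if "a \<in> borel_measurable N" "b \<in> measurable N ES" for a b and N :: "'b measure"
    using measurable_compose[OF measurable_Pair[OF that] Psi] by simp
  define C where "C = (\<integral>\<^sup>+s. indicator {0<..} s * \<integral>\<^sup>+\<omega>. psi \<alpha> (ereal s) (ppr_Ttilde Q P \<omega>) \<partial>ppr_space Q \<partial>lborel)"
  have "C = (\<integral>\<^sup>+\<omega>. (\<Sum>k. psi \<alpha> (ppr_Ttilde Q P \<omega> k) (dl k (ppr_Ttilde Q P \<omega>))) \<partial>ppr_space Q)"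
    unfolding C_def by (rule master_space[OF Q P acP Psi, symmetric]) simp
  also have "\<dots> = (\<integral>\<^sup>+\<omega>. 1 \<partial>ppr_space Q)"
    by (rule nn_integral_cong_AE[OF AE_sum_one[OF Q P acP alpha]])
  also have "\<dots> = 1" by (rule int_const_ppr[OF Q])
  finally have C1: "C = 1" .
  have "ppr_output_prob \<alpha> Q P A = (\<integral>\<^sup>+\<omega>. (\<Sum>k. indicator A (fst \<omega> k) * psi \<alpha> (ppr_Ttilde Q P \<omega> k) (dl k (ppr_Ttilde Q P \<omega>))) \<partial>ppr_space Q)"
    unfolding ppr_output_prob_def by (simp add: index_psi mult.commute)
  also have "\<dots> = (\<Sum>k. \<integral>\<^sup>+\<omega>. indicator A (fst \<omega> k) * psi \<alpha> (ppr_Ttilde Q P \<omega> k) (dl k (ppr_Ttilde Q P \<omega>)) \<partial>ppr_space Q)"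
    by (rule nn_integral_suminf) (use A in measurable)
  also have "\<dots> = C * emeasure P A"
    unfolding C_def by (rule master[OF Q P acP Psi _ A]) simp
  finally show ?thesis using C1 by (simp add: P_def)
qed


end
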